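(* Let $\{X_n;n\ge1\}$ and $\{Y_n;n\ge1\}$ be two sequences of independent non-negative continuous random variables, where $Y_n$ has distribution function $F_n$ with $\overline F_n(t)>0$ for all $t\ge0$. Let $\{T'_n\}$ (counting process $N'$) be the failure times of the replacement-by-a-new-unit process based on $\{X_n\}$, and $\{T_n\}$ (counting process $N$) the failure times of the relevation process based on $\{F_n\}$. If (a) $X_1\ge_{\mathrm{st}}Y_1$, and (b) $X_n\ge_{\mathrm{st}}[Y_n-t\mid Y_n>t]$ for all $n\ge2$ and all $t>0$, then $(T'_1,\ldots,T'_n)\ge_{\mathrm{st}}(T_1,\ldots,T_n)$ for all $n\ge1$ and $N'(t)\le_{\mathrm{st}}N(t)$ for all $t\ge0$. Likewise, if (a) and (b) hold with $\le_{\mathrm{st}}$ in place of $\ge_{\mathrm{st}}$, then $(T'_1,\ldots,T'_n)\le_{\mathrm{st}}(T_1,\ldots,T_n)$ for all $n\ge 1$ and $N'(t)\ge_{\mathrm{st}}N(t)$ for all $t\ge0$.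
   Context: Relevation process based on $\{F_n\}$: random times $0<T_1<T_2<\cdots$ with $T_1\sim F_1$ and, for $i\ge2$, conditionally on $T_1=t_1,\ldots,T_{i-1}=t_{i-1}$ ($0<t_1<\cdots<t_{i-1}$), $P(T_i>t\mid\cdot)=\overline F_i(t)/\overline F_i(t_{i-1})$ for $t\ge t_{i-1}$; $N(t)=\sup\{n:T_n\le t\}$. Replacement-by-a-new-unit process: $T'_n=X_1+\cdots+X_n$, $N'(t)=\sup\{n:T'_n\le t\}$. $X\le_{\mathrm{st}}Y$ for random variables means $P(X>t)\le P(Y>t)$ for all $t$; for random vectors it means $E[\phi(\mathbf X)]\le E[\phi(\mathbf Y)]$ for all componentwise increasing $\phi$ for which the expectations exist. *)

theory Defs
  imports "HOL-Probability.Probability"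
begin

definition surv :: "'a measure \<Rightarrow> ('a \<Rightarrow> real) \<Rightarrow> real \<Rightarrow> real" where
  "surv M Z t = measure M {\<omega> \<in> space M. Z \<omega> > t}"

definition continuous_rv :: "'a measure \<Rightarrow> ('a \<Rightarrow> real) \<Rightarrow> bool" where
  "continuous_rv M Z \<longleftrightarrow> continuous_on UNIV (\<lambda>t. measure M {\<omega> \<in> space M. Z \<omega> \<le> t})"

definition st_le :: "'a measure \<Rightarrow> ('a \<Rightarrow> 'c::linorder) \<Rightarrow> 'b measure \<Rightarrow> ('b \<Rightarrow> 'c) \<Rightarrow> bool" where
  "st_le M Z M' W \<longleftrightarrow>
     (\<forall>s. measure M {\<omega> \<in> space M. s < Z \<omega>} \<le> measure M' {\<omega> \<in> space M'. s < W \<omega>})"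

definition vec :: "nat \<Rightarrow> (nat \<Rightarrow> 'a \<Rightarrow> real) \<Rightarrow> 'a \<Rightarrow> (nat \<Rightarrow> real)" where
  "vec n V \<omega> = restrict (\<lambda>i. V i \<omega>) {1..n}"

definition st_le_vec :: "nat \<Rightarrow> 'a measure \<Rightarrow> (nat \<Rightarrow> 'a \<Rightarrow> real) \<Rightarrow> 'b measure \<Rightarrow> (nat \<Rightarrow> 'b \<Rightarrow> real) \<Rightarrow> bool" where
  "st_le_vec n M V M' W \<longleftrightarrow>
     (\<forall>\<phi> :: (nat \<Rightarrow> real) \<Rightarrow> real.
        \<phi> \<in> borel_measurable (PiM {1..n} (\<lambda>_. borel)) \<longrightarrow>
        (\<forall>x \<in> space (PiM {1..n} (\<lambda>_. borel)). \<forall>y \<in> space (PiM {1..n} (\<lambda>_. borel)).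
            (\<forall>i\<in>{1..n}. x i \<le> y i) \<longrightarrow> \<phi> x \<le> \<phi> y) \<longrightarrow>
        integrable M (\<lambda>\<omega>. \<phi> (vec n V \<omega>)) \<longrightarrow>
        integrable M' (\<lambda>\<omega>. \<phi> (vec n W \<omega>)) \<longrightarrow>
        (\<integral>\<omega>. \<phi> (vec n V \<omega>) \<partial>M) \<le> (\<integral>\<omega>. \<phi> (vec n W \<omega>) \<partial>M'))"

definition replacement_times :: "(nat \<Rightarrow> 'a \<Rightarrow> real) \<Rightarrow> nat \<Rightarrow> 'a \<Rightarrow> real" where
  "replacement_times X n \<omega> = (\<Sum>i\<in>{1..n}. X i \<omega>)"

text \<open>Counting process N(t) = sup {n : T_n \<le> t} (0 if no such n), valued in enat.\<close>
definition counting :: "(nat \<Rightarrow> 'a \<Rightarrow> real) \<Rightarrow> real \<Rightarrow> 'a \<Rightarrow> enat" where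
  "counting T t \<omega> = (SUP n \<in> {n::nat. 1 \<le> n \<and> T n \<omega> \<le> t}. enat n)"

text \<open>T is (a version of) the relevation process based on the survival functions Fbar:
  0 < T 1 < T 2 < ..., T_1 has survival function Fbar 1, and for i \<ge> 2
  P(T_i > t | T_1,...,T_{i-1}) = Fbar_i(t)/Fbar_i(T_{i-1}) for t \<ge> T_{i-1} (and = 1 for t < T_{i-1}),
  the conditional probability being expressed by its defining integral identity.\<close>
definition relevation_process :: "'b measure \<Rightarrow> (nat \<Rightarrow> 'b \<Rightarrow> real) \<Rightarrow> (nat \<Rightarrow> real \<Rightarrow> real) \<Rightarrow> bool" where
  "relevation_process M' T Fbar \<longleftrightarrow>
     (\<forall>i\<ge>1. T i \<in> borel_measurable M') \<and>
     (\<forall>\<omega>\<in>space M'. 0 < T 1 \<omega> \<and> (\<forall>i\<ge>1. T i \<omega> < T (Suc i) \<omega>)) \<and>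
     (\<forall>t. measure M' {\<omega> \<in> space M'. T 1 \<omega> > t} = Fbar 1 t) \<and>
     (\<forall>i\<ge>2. \<forall>t. \<forall>A \<in> sets (PiM {1..i-1} (\<lambda>_. borel)).
        measure M' {\<omega> \<in> space M'. T i \<omega> > t \<and> vec (i-1) T \<omega> \<in> A} =
        (\<integral>\<omega>. indicator {\<omega> \<in> space M'. vec (i-1) T \<omega> \<in> A} \<omega> *
               (if T (i-1) \<omega> \<le> t then Fbar i t / Fbar i (T (i-1) \<omega>) else 1) \<partial>M'))"

end

theory Submission
  imports Defs
begin

lemma upset_le:
  fixes \<mu> \<nu> :: "real measure"
  assumes sm: "sets \<mu> = sets borel" and sn: "sets \<nu> = sets borel"
    and fm: "finite_measure \<mu>" and fn: "finite_measure \<nu>"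
    and le: "\<And>s. emeasure \<mu> {s<..} \<le> emeasure \<nu> {s<..}"
    and up: "\<And>x y. x \<in> U \<Longrightarrow> x \<le> y \<Longrightarrow> y \<in> U"
  shows "emeasure \<mu> U \<le> emeasure \<nu> U"
proof -
  have Ioi_m: "{s<..} \<in> sets \<mu>" "{s<..} \<in> sets \<nu>" for s :: real using sm sn by auto
  have Ici_m: "{s..} \<in> sets \<mu>" "{s..} \<in> sets \<nu>" for s :: real using sm sn by auto
  have univ: "emeasure \<mu> UNIV \<le> emeasure \<nu> UNIV"
  proof -
    let ?A = "\<lambda>k::nat. {- real k<..}"
    have inc: "incseq ?A" by (auto simp: incseq_def)
    have un: "(\<Union>k. ?A k) = UNIV"
    proof safe
      fix x :: real
      obtain k :: nat where "-x < real k" using reals_Archimedean2 by blast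
      then have "- real k < x" by simp
      then show "x \<in> (\<Union>k. ?A k)" by auto
    qed auto
    have r1: "range ?A \<subseteq> sets \<mu>" "range ?A \<subseteq> sets \<nu>" using Ioi_m by auto
    have "emeasure \<mu> UNIV = (SUP k. emeasure \<mu> (?A k))"
      using SUP_emeasure_incseq[of ?A \<mu>, OF r1(1) inc] un by simp
    also have "\<dots> \<le> (SUP k. emeasure \<nu> (?A k))" by (intro SUP_mono) (use le in auto)
    also have "\<dots> = emeasure \<nu> UNIV"
      using SUP_emeasure_incseq[of ?A \<nu>, OF r1(2) inc] un by simp
    finally show ?thesis .
  qed
  show ?thesis
  proof (cases "U = UNIV")
    case True then show ?thesis using univ by simp
  next
    case nU: False
    show ?thesis
    proof (cases "U = {}")
      case True then show ?thesis by simp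
    next
      case ne: False
      obtain z where z: "z \<notin> U" using nU by blast
      have gt: "x \<in> U \<Longrightarrow> z < x" for x using up[of x z] z by force
      have bdd: "bdd_below U" using gt by (auto intro!: bdd_belowI[of _ z] less_imp_le)
      define r where "r = Inf U"
      show ?thesis
      proof (cases "r \<in> U")
        case True
        have U: "U = {r..}"
        proof safe
          fix x assume "x \<in> U" then show "r \<le> x" unfolding r_def using bdd by (simp add: cInf_lower)
        next
          fix x assume "r \<le> x" then show "x \<in> U" using up True by blast
        qed
        let ?A = "\<lambda>k::nat. {r - 1 / real (Suc k)<..}"
        have dec: "decseq ?A" unfolding decseq_def
        proof (intro allI impI subsetI)
          fix m n :: nat and x assume mn: "m \<le> n" and x: "x \<in> ?A n"
          have "1 / real (Suc n) \<le> 1 / real (Suc m)" using mn by (simp add: frac_le)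
          then show "x \<in> ?A m" using x by simp
        qed
        have int1: "(\<Inter>k. ?A k) \<subseteq> {r..}"
        proof
          fix x assume "x \<in> (\<Inter>k. ?A k)"
          then have h: "\<And>k::nat. r - 1 / real (Suc k) < x" by auto
          show "x \<in> {r..}"
          proof (rule ccontr)
            assume "x \<notin> {r..}"
            then have "0 < r - x" by simp
            then obtain k :: nat where "1 / real (Suc k) < r - x"
              using reals_Archimedean[of "r - x"] by (auto simp: inverse_eq_divide)
            then show False using h[of k] by simp
          qed
        qed
        have int2: "{r..} \<subseteq> ?A k" for k
        proof
          fix x assume "x \<in> {r..}"
          then have "r \<le> x" by simp
          moreover have "0 < 1 / real (Suc k)" by simp
          ultimately have "r - 1 / real (Suc k) < x" by linarith
          then show "x \<in> ?A k" by simp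
        qed
        have int: "(\<Inter>k. ?A k) = {r..}" using int1 int2 by blast
        have fin: "\<And>M. finite_measure M \<Longrightarrow> emeasure M A \<noteq> \<infinity>" for A :: "real set"
          by (simp add: finite_measure.emeasure_finite)
        have r1: "range ?A \<subseteq> sets \<mu>" "range ?A \<subseteq> sets \<nu>" using Ioi_m by auto
        have "emeasure \<mu> U = (INF k. emeasure \<mu> (?A k))"
          using INF_emeasure_decseq'[where M = \<mu> and A = ?A, OF _ dec] Ioi_m fin[OF fm] int U by simp
        also have "\<dots> \<le> (INF k. emeasure \<nu> (?A k))" by (intro INF_mono) (use le in auto)
        also have "\<dots> = emeasure \<nu> U"
          using INF_emeasure_decseq'[where M = \<nu> and A = ?A, OF _ dec] Ioi_m fin[OF fn] int U by simp
        finally show ?thesis .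
      next
        case False
        have U: "U = {r<..}"
        proof safe
          fix x assume "x \<in> U" then show "r < x" unfolding r_def using bdd False
            by (metis cInf_lower order_le_less r_def)
        next
          fix x assume "r < x"
          then obtain y where "y \<in> U" "y < x" using cInf_less_iff[OF ne bdd] unfolding r_def by blast
          then show "x \<in> U" using up by auto
        qed
        show ?thesis using le U by simp
      qed
    qed
  qed
qed

lemma lborel_Ioi0: "emeasure lborel ({0<..}::real set) = \<infinity>"
proof (rule ccontr)
  assume "emeasure lborel ({0<..}::real set) \<noteq> \<infinity>"
  then obtain c where c: "emeasure lborel ({0<..}::real set) = ennreal c" "0 \<le> c"
    by (cases "emeasure lborel ({0<..}::real set)" rule: ennreal_cases) auto
  have "emeasure lborel {0<..<c+1} \<le> emeasure lborel ({0<..}::real set)"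
    by (rule emeasure_mono) auto
  then have "ennreal (c+1) \<le> ennreal c" using c by simp
  then show False using c by (simp add: ennreal_le_iff)
qed

lemma inner_layer:
  fixes v :: ennreal
  shows "(\<integral>\<^sup>+t. indicator {t::real. 0 < t \<and> ennreal t < v} t \<partial>lborel) = v"
proof (cases v rule: ennreal_cases)
  case top
  then have "{t::real. 0 < t \<and> ennreal t < v} = {0<..}" by auto
  then show ?thesis using top lborel_Ioi0 by simp
next
  case (real r)
  then have "{t::real. 0 < t \<and> ennreal t < v} = {0<..<r}" by (auto simp: ennreal_less_iff)
  then show ?thesis using real by simp
qed

lemma layer_eq:
  fixes \<mu> :: "real measure" and g :: "real \<Rightarrow> ennreal"
  assumes sm: "sets \<mu> = sets borel" and fm: "finite_measure \<mu>"
    and g: "g \<in> borel_measurable borel"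
  shows "(\<integral>\<^sup>+x. g x \<partial>\<mu>) = (\<integral>\<^sup>+t. emeasure \<mu> {x. 0 < t \<and> ennreal t < g x} \<partial>lborel)"
proof -
  interpret finite_measure \<mu> by fact
  interpret pair_sigma_finite \<mu> lborel by unfold_locales
  have sp: "space \<mu> = UNIV" using sets_eq_imp_space_eq[OF sm] by simp
  let ?f = "\<lambda>x t. indicator {t::real. 0 < t \<and> ennreal t < g x} t :: ennreal"
  have meas0: "(\<lambda>z::real\<times>real. ?f (fst z) (snd z)) \<in> borel_measurable (borel \<Otimes>\<^sub>M lborel)"
    using g by measurable
  have meas: "case_prod ?f \<in> borel_measurable (\<mu> \<Otimes>\<^sub>M lborel)"
    using meas0 by (subst measurable_cong_sets[OF sets_pair_measure_cong[OF sm refl] refl]) (simp add: case_prod_beta')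
  have "(\<integral>\<^sup>+x. g x \<partial>\<mu>) = (\<integral>\<^sup>+x. (\<integral>\<^sup>+t. ?f x t \<partial>lborel) \<partial>\<mu>)"
    by (simp add: inner_layer)
  also have "\<dots> = (\<integral>\<^sup>+t. (\<integral>\<^sup>+x. ?f x t \<partial>\<mu>) \<partial>lborel)"
    using Fubini'[OF meas] by simp
  also have "\<dots> = (\<integral>\<^sup>+t. emeasure \<mu> {x. 0 < t \<and> ennreal t < g x} \<partial>lborel)"
  proof (rule nn_integral_cong)
    fix t :: real
    have "{x. 0 < t \<and> ennreal t < g x} \<in> sets \<mu>" unfolding sm using g by measurable
    moreover have "?f x t = indicator {x. 0 < t \<and> ennreal t < g x} x" for x
      by (simp add: indicator_def)
    ultimately show "(\<integral>\<^sup>+x. ?f x t \<partial>\<mu>) = emeasure \<mu> {x. 0 < t \<and> ennreal t < g x}"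
      by (simp add: nn_integral_indicator)
  qed
  finally show ?thesis .
qed

lemma oneD:
  fixes \<mu> \<nu> :: "real measure" and g :: "real \<Rightarrow> ennreal"
  assumes sm: "sets \<mu> = sets borel" and sn: "sets \<nu> = sets borel"
    and fm: "finite_measure \<mu>" and fn: "finite_measure \<nu>"
    and le: "\<And>s. emeasure \<mu> {s<..} \<le> emeasure \<nu> {s<..}"
    and g: "g \<in> borel_measurable borel" and mono: "mono g"
  shows "(\<integral>\<^sup>+x. g x \<partial>\<mu>) \<le> (\<integral>\<^sup>+x. g x \<partial>\<nu>)"
proof -
  have "(\<integral>\<^sup>+t. emeasure \<mu> {x. 0 < t \<and> ennreal t < g x} \<partial>lborel)
      \<le> (\<integral>\<^sup>+t. emeasure \<nu> {x. 0 < t \<and> ennreal t < g x} \<partial>lborel)"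
  proof (rule nn_integral_mono)
    fix t :: real
    show "emeasure \<mu> {x. 0 < t \<and> ennreal t < g x} \<le> emeasure \<nu> {x. 0 < t \<and> ennreal t < g x}"
    proof (rule upset_le[OF sm sn fm fn le])
      fix x y assume "x \<in> {x. 0 < t \<and> ennreal t < g x}" "x \<le> y"
      then show "y \<in> {x. 0 < t \<and> ennreal t < g x}" using mono[THEN monoD, of x y] by auto
    qed
  qed
  then show ?thesis using layer_eq[OF sm fm g] layer_eq[OF sn fn g] by simp
qed

lemma sets_prod_Ioi:
  fixes N :: "'a measure"
  shows "sets (N \<Otimes>\<^sub>M (borel::real measure)) = sigma_sets (space N \<times> UNIV) {a \<times> {t<..} | a t. a \<in> sets N}"
proof
  let ?E = "{a \<times> {t<..} | a (t::real). a \<in> sets N}"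
  let ?S = "sigma_sets (space N \<times> (UNIV::real set)) ?E"
  have EP: "?E \<subseteq> Pow (space N \<times> UNIV)" using sets.sets_into_space by fastforce
  interpret S: sigma_algebra "space N \<times> (UNIV::real set)" ?S
    by (rule sigma_algebra_sigma_sets[OF EP])
  have "?E \<subseteq> sets (N \<Otimes>\<^sub>M borel)" by (auto intro!: pair_measureI simp: borel_open)
  from sets.sigma_sets_subset[OF this] show "?S \<subseteq> sets (N \<Otimes>\<^sub>M borel)"
    by (simp add: space_pair_measure)
  have rect: "a \<times> b \<in> ?S" if a: "a \<in> sets N" and b: "b \<in> sets (borel::real measure)" for a b
  proof -
    have "b \<in> sigma_sets UNIV (range greaterThan)"
      using b by (subst (asm) borel_Ioi) (simp add: sets_measure_of)
    then show ?thesis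
    proof (induct rule: sigma_sets.induct)
      case (Basic b)
      then obtain t where "b = {t<..}" by auto
      then have "a \<times> b \<in> ?E" using a by blast
      then show ?case by (rule sigma_sets.Basic)
    next
      case Empty then show ?case by (simp add: sigma_sets.Empty)
    next
      case (Compl b)
      have aU: "a \<times> UNIV = (\<Union>k::nat. a \<times> {- real k<..})"
      proof safe
        fix x y assume "x \<in> a"
        obtain k :: nat where "-y < real k" using reals_Archimedean2 by blast
        then have "- real k < y" by simp
        then show "(x, y) \<in> (\<Union>k::nat. a \<times> {- real k<..})" using \<open>x \<in> a\<close> by auto
      qed auto
      have "a \<times> {- real k<..} \<in> ?S" for k :: nat
        using a by (intro sigma_sets.Basic) blast
      then have "a \<times> UNIV \<in> ?S" unfolding aU by blast
      moreover have "a \<times> (UNIV - b) = a \<times> UNIV - a \<times> b" by auto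
      ultimately show ?case using Compl(2) S.Diff by simp
    next
      case (Union B)
      have "a \<times> (\<Union>i. B i) = (\<Union>i. a \<times> B i)" by auto
      then show ?case using Union(2) by (simp add: sigma_sets.Union)
    qed
  qed
  show "sets (N \<Otimes>\<^sub>M borel) \<subseteq> ?S"
    unfolding sets_pair_measure space_borel by (rule S.sigma_sets_subset) (use rect in blast)
qed

definition join :: "nat \<Rightarrow> (nat \<Rightarrow> real) \<Rightarrow> real \<Rightarrow> (nat \<Rightarrow> real)" where
  "join n x y = restrict (x(Suc n := y)) {1..Suc n}"

abbreviation PP :: "nat \<Rightarrow> (nat \<Rightarrow> real) measure" where
  "PP n \<equiv> PiM {1..n} (\<lambda>_. borel)"

lemma vec_Suc: "vec (Suc n) V \<omega> = join n (vec n V \<omega>) (V (Suc n) \<omega>)"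
  unfolding vec_def join_def by (auto simp: fun_eq_iff restrict_def)

lemma vec_space: "vec n V \<omega> \<in> space (PP n)"
  unfolding vec_def by (simp add: space_PiM)

lemma join_space: "join n x y \<in> space (PP (Suc n))"
  unfolding join_def by (simp add: space_PiM)

lemma comp_meas: "(\<lambda>x. x j) \<in> borel_measurable (PiM I (\<lambda>_. (borel :: real measure)))"
proof (cases "j \<in> I")
  case True then show ?thesis by (rule measurable_component_singleton)
next
  case False
  show ?thesis
    by (subst measurable_cong[where g="\<lambda>x. undefined"]) (use False in \<open>auto simp: space_PiM PiE_def extensional_def\<close>)
qed

lemma join_meas: "(\<lambda>z. join n (fst z) (snd z)) \<in> measurable (PP n \<Otimes>\<^sub>M borel) (PP (Suc n))"
  unfolding join_def
proof (rule measurable_restrict)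
  fix i assume "i \<in> {1..Suc n}"
  have "(\<lambda>z::(nat\<Rightarrow>real)\<times>real. if i = Suc n then snd z else fst z i) \<in> borel_measurable (PP n \<Otimes>\<^sub>M borel)"
    using comp_meas[of i "{1..n}"] by measurable
  then show "(\<lambda>z. ((fst z)(Suc n := snd z)) i) \<in> borel_measurable (PP n \<Otimes>\<^sub>M borel)"
    by simp
qed

lemma vec_meas:
  assumes "\<And>i. i \<in> {1..n} \<Longrightarrow> V i \<in> borel_measurable N"
  shows "vec n V \<in> measurable N (PP n)"
  unfolding vec_def by (rule measurable_restrict) (use assms in auto)

lemma join_mono:
  assumes "\<forall>i\<in>{1..n}. x i \<le> x' i" "y \<le> y'"
  shows "\<forall>i\<in>{1..Suc n}. join n x y i \<le> join n x' y' i"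
  using assms unfolding join_def by auto


context
  fixes M :: "'a measure" and M' :: "'b measure"
    and X Y :: "nat \<Rightarrow> 'a \<Rightarrow> real" and T :: "nat \<Rightarrow> 'b \<Rightarrow> real"
  assumes pM: "prob_space M" and pM': "prob_space M'"
    and indX: "prob_space.indep_vars M (\<lambda>_. borel) X {1::nat..}"
    and indY: "prob_space.indep_vars M (\<lambda>_. borel) Y {1::nat..}"
    and nonneg: "\<forall>n\<ge>1. \<forall>\<omega>\<in>space M. 0 \<le> X n \<omega> \<and> 0 \<le> Y n \<omega>"
    and posF: "\<forall>n\<ge>1. \<forall>t\<ge>0. surv M (Y n) t > 0"
    and rel: "relevation_process M' T (\<lambda>n. surv M (Y n))"
begin

lemma measX: "1 \<le> i \<Longrightarrow> X i \<in> borel_measurable M"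
  using indX pM by (auto simp: prob_space.indep_vars_def)

lemma measY: "1 \<le> i \<Longrightarrow> Y i \<in> borel_measurable M"
  using indY pM by (auto simp: prob_space.indep_vars_def)

lemma measT: "1 \<le> i \<Longrightarrow> T i \<in> borel_measurable M'"
  using rel by (simp add: relevation_process_def)

lemma Tpos:
  assumes w: "\<omega> \<in> space M'" and i: "1 \<le> i" shows "0 < T i \<omega>"
  using i
proof (induct i rule: dec_induct)
  case base then show ?case using rel w by (simp add: relevation_process_def)
next
  case (step i)
  then have "T i \<omega> < T (Suc i) \<omega>" using rel w by (simp add: relevation_process_def)
  then show ?case using step by simp
qed

lemma F_anti: "1 \<le> m \<Longrightarrow> u \<le> v \<Longrightarrow> surv M (Y m) v \<le> surv M (Y m) u"
proof -
  assume m: "1 \<le> m" and uv: "u \<le> v"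
  interpret prob_space M by (rule pM)
  have "{\<omega> \<in> space M. Y m \<omega> > u} \<in> sets M" using measY[OF m] by measurable
  then show ?thesis unfolding surv_def using uv by (intro finite_measure_mono) auto
qed

lemma F_nonneg: "0 \<le> surv M (Y m) u"
  unfolding surv_def by simp

lemma F_meas: "1 \<le> m \<Longrightarrow> (\<lambda>u. surv M (Y m) u) \<in> borel_measurable borel"
proof -
  assume m: "1 \<le> m"
  have "mono (\<lambda>u. - surv M (Y m) u)" using F_anti[OF m] by (auto simp: mono_def)
  then have "(\<lambda>u. - surv M (Y m) u) \<in> borel_measurable borel" by (rule borel_measurable_mono)
  then have "(\<lambda>u. - (- surv M (Y m) u)) \<in> borel_measurable borel" by measurable
  then show ?thesis by simp
qed

lemma K:
  assumes n: "1 \<le> n" and h: "h \<in> borel_measurable (PP n \<Otimes>\<^sub>M borel)"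
  shows "(\<integral>\<^sup>+\<omega>'. h (vec n T \<omega>', T (Suc n) \<omega>') \<partial>M') =
    (\<integral>\<^sup>+\<omega>'. \<integral>\<^sup>+\<omega>. h (vec n T \<omega>', Y (Suc n) \<omega>) * indicator {\<omega>. T n \<omega>' < Y (Suc n) \<omega>} \<omega>
        * ennreal (1 / surv M (Y (Suc n)) (T n \<omega>')) \<partial>M \<partial>M')"
proof -
  interpret M: prob_space M by (rule pM)
  interpret M': prob_space M' by (rule pM')
  interpret pair_sigma_finite M' M by unfold_locales
  let ?m = "Suc n"
  let ?F = "surv M (Y ?m)"
  have mT: "vec n T \<in> measurable M' (PP n)" by (rule vec_meas) (use measT in auto)
  have mTm: "T ?m \<in> borel_measurable M'" "T n \<in> borel_measurable M'" using measT n by auto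
  have mY: "Y ?m \<in> borel_measurable M" using measY by auto
  have mF: "?F \<in> borel_measurable borel" using F_meas by auto
  define p where "p \<omega>' = (vec n T \<omega>', T ?m \<omega>')" for \<omega>'
  define q where "q z = (vec n T (fst z), Y ?m (snd z))" for z :: "'b \<times> 'a"
  define \<rho> where "\<rho> z = indicator {z. T n (fst z) < Y ?m (snd z)} z * ennreal (1 / ?F (T n (fst z)))" for z :: "'b \<times> 'a"
  have mp: "p \<in> measurable M' (PP n \<Otimes>\<^sub>M borel)" unfolding p_def using mT mTm by measurable
  have mq: "q \<in> measurable (M' \<Otimes>\<^sub>M M) (PP n \<Otimes>\<^sub>M borel)" unfolding q_def using mT mY by measurable
  have mFT: "(\<lambda>z. ?F (T n (fst z))) \<in> borel_measurable (M' \<Otimes>\<^sub>M M)"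
    using measurable_comp[OF measurable_comp[OF measurable_fst mTm(2)] mF] by (simp add: comp_def)
  have mrho: "\<rho> \<in> borel_measurable (M' \<Otimes>\<^sub>M M)" unfolding \<rho>_def using mTm mY mFT by measurable
  have mhq: "(\<lambda>z. h (q z)) \<in> borel_measurable (M' \<Otimes>\<^sub>M M)"
    using measurable_comp[OF mq h] by (simp add: comp_def)
  define \<nu>1 where "\<nu>1 = distr M' (PP n \<Otimes>\<^sub>M borel) p"
  define \<nu>2 where "\<nu>2 = distr (density (M' \<Otimes>\<^sub>M M) \<rho>) (PP n \<Otimes>\<^sub>M borel) q"
  let ?E = "{a \<times> {t<..} | a (t::real). a \<in> sets (PP n)}"
  have eq: "\<nu>1 = \<nu>2"
  proof (rule measure_eqI_generator_eq[where \<Omega> = "space (PP n) \<times> UNIV" and E = ?E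
        and A = "\<lambda>k. space (PP n) \<times> {- real k<..}"])
    show "Int_stable ?E"
    proof (rule Int_stableI)
      fix A B assume "A \<in> ?E" "B \<in> ?E"
      then obtain a t b s where "A = a \<times> {t<..}" "B = b \<times> {s<..}" "a \<in> sets (PP n)" "b \<in> sets (PP n)"
        by blast
      moreover have "a \<times> {t<..} \<inter> b \<times> {s<..} = (a \<inter> b) \<times> {max t s<..}" by auto
      ultimately show "A \<inter> B \<in> ?E" by blast
    qed
    show "?E \<subseteq> Pow (space (PP n) \<times> UNIV)" using sets.sets_into_space by fastforce
    show "sets \<nu>1 = sigma_sets (space (PP n) \<times> UNIV) ?E" unfolding \<nu>1_def using sets_prod_Ioi by simp
    show "sets \<nu>2 = sigma_sets (space (PP n) \<times> UNIV) ?E" unfolding \<nu>2_def using sets_prod_Ioi by simp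
    show "range (\<lambda>k. space (PP n) \<times> {- real k<..}) \<subseteq> ?E" by blast
    show "(\<Union>k. space (PP n) \<times> {- real k<..}) = space (PP n) \<times> UNIV"
    proof safe
      fix x y assume "x \<in> space (PP n)"
      obtain k :: nat where "-y < real k" using reals_Archimedean2 by blast
      then have "- real k < y" by simp
      then show "(x, y) \<in> (\<Union>k::nat. space (PP n) \<times> {- real k<..})" using \<open>x \<in> space (PP n)\<close> by auto
    qed auto
    have "prob_space \<nu>1" unfolding \<nu>1_def using mp by (rule M'.prob_space_distr)
    then interpret P1: prob_space \<nu>1 .
    show "emeasure \<nu>1 (space (PP n) \<times> {- real k<..}) \<noteq> \<infinity>" for k
      by (simp add: P1.emeasure_eq_measure)
    fix Z assume "Z \<in> ?E"
    then obtain a t where Z: "Z = a \<times> {t<..}" and a: "a \<in> sets (PP n)" by blast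
    have Zs: "Z \<in> sets (PP n \<Otimes>\<^sub>M borel)" using Z a by (auto intro!: pair_measureI)
    define G where "G \<omega>' = indicator {\<omega>'\<in>space M'. vec n T \<omega>' \<in> a} \<omega>' *
       (if T n \<omega>' \<le> t then ?F t / ?F (T n \<omega>') else 1)" for \<omega>'
    have Gnn: "0 \<le> G \<omega>'" for \<omega>' unfolding G_def using F_nonneg by auto
    have Gle: "G \<omega>' \<le> 1" if "\<omega>' \<in> space M'" for \<omega>'
    proof -
      have "0 < ?F (T n \<omega>')" using posF Tpos[OF that n] by auto
      moreover have "T n \<omega>' \<le> t \<Longrightarrow> ?F t \<le> ?F (T n \<omega>')" using F_anti by auto
      ultimately show ?thesis unfolding G_def by (auto simp: indicator_def)
    qed
    have aset: "{\<omega>'\<in>space M'. vec n T \<omega>' \<in> a} \<in> sets M'" using mT a by measurable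
    have mG: "G \<in> borel_measurable M'"
    proof -
      have "(\<lambda>\<omega>'. ?F (T n \<omega>')) \<in> borel_measurable M'" using measurable_comp[OF mTm(2) mF] by (simp add: comp_def)
      then show ?thesis unfolding G_def using aset mTm by measurable
    qed
    have intG: "integrable M' G"
      by (rule M'.integrable_const_bound[where B=1]) (use Gnn Gle mG in auto)
    have s1: "p -` Z \<inter> space M' = {\<omega>' \<in> space M'. t < T ?m \<omega>' \<and> vec n T \<omega>' \<in> a}"
      by (auto simp: p_def Z)
    have "emeasure \<nu>1 Z = emeasure M' (p -` Z \<inter> space M')"
      unfolding \<nu>1_def using mp Zs by (simp add: emeasure_distr)
    also have "\<dots> = ennreal (measure M' {\<omega>' \<in> space M'. t < T ?m \<omega>' \<and> vec n T \<omega>' \<in> a})"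
      by (simp add: s1 M'.emeasure_eq_measure)
    also have "measure M' {\<omega>' \<in> space M'. t < T ?m \<omega>' \<and> vec n T \<omega>' \<in> a} = (\<integral>\<omega>'. G \<omega>' \<partial>M')"
    proof -
      have "?m \<ge> 2" using n by simp
      then have "measure M' {\<omega> \<in> space M'. T ?m \<omega> > t \<and> vec (?m-1) T \<omega> \<in> a} =
        (\<integral>\<omega>. indicator {\<omega> \<in> space M'. vec (?m-1) T \<omega> \<in> a} \<omega> *
               (if T (?m-1) \<omega> \<le> t then ?F t / ?F (T (?m-1) \<omega>) else 1) \<partial>M')"
      proof -
        have rel4: "\<forall>i\<ge>2. \<forall>t. \<forall>A \<in> sets (PiM {1..i-1} (\<lambda>_. borel)).
          measure M' {\<omega> \<in> space M'. T i \<omega> > t \<and> vec (i-1) T \<omega> \<in> A} =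
          (\<integral>\<omega>. indicator {\<omega> \<in> space M'. vec (i-1) T \<omega> \<in> A} \<omega> *
               (if T (i-1) \<omega> \<le> t then surv M (Y i) t / surv M (Y i) (T (i-1) \<omega>) else 1) \<partial>M')"
          using rel unfolding relevation_process_def by blast
        have a': "a \<in> sets (PiM {1..?m-1} (\<lambda>_. borel))" using a by simp
        show ?thesis using rel4[rule_format, OF \<open>?m \<ge> 2\<close> a', of t] .
      qed
      moreover have sm1: "Suc n - 1 = n" by simp
      ultimately show ?thesis unfolding G_def sm1 by simp
    qed
    also have "ennreal (\<integral>\<omega>'. G \<omega>' \<partial>M') = (\<integral>\<^sup>+\<omega>'. ennreal (G \<omega>') \<partial>M')"
      by (rule nn_integral_eq_integral[symmetric]) (use intG Gnn in auto)
    finally have e1: "emeasure \<nu>1 Z = (\<integral>\<^sup>+\<omega>'. ennreal (G \<omega>') \<partial>M')" .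
    define S where "S = q -` Z \<inter> space (M' \<Otimes>\<^sub>M M)"
    have Ss: "S \<in> sets (M' \<Otimes>\<^sub>M M)" unfolding S_def using mq Zs by measurable
    have "emeasure \<nu>2 Z = emeasure (density (M' \<Otimes>\<^sub>M M) \<rho>) S"
      unfolding \<nu>2_def S_def using mq Zs by (simp add: emeasure_distr)
    also have "\<dots> = (\<integral>\<^sup>+z. \<rho> z * indicator S z \<partial>(M' \<Otimes>\<^sub>M M))"
      using mrho Ss by (rule emeasure_density)
    also have "\<dots> = (\<integral>\<^sup>+\<omega>'. \<integral>\<^sup>+\<omega>. \<rho> (\<omega>', \<omega>) * indicator S (\<omega>', \<omega>) \<partial>M \<partial>M')"
      using M.nn_integral_fst[of "\<lambda>z. \<rho> z * indicator S z" M'] mrho Ss by simp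
    also have "\<dots> = (\<integral>\<^sup>+\<omega>'. ennreal (G \<omega>') \<partial>M')"
    proof (rule nn_integral_cong)
      fix \<omega>' assume w': "\<omega>' \<in> space M'"
      let ?u = "T n \<omega>'"
      let ?c = "indicator {\<omega>'\<in>space M'. vec n T \<omega>' \<in> a} \<omega>' * (1 / ?F ?u)"
      have upos: "0 < ?u" using Tpos[OF w' n] .
      have Fu: "0 < ?F ?u" using posF upos by auto
      have Bs: "{\<omega> \<in> space M. ?u < Y ?m \<omega> \<and> t < Y ?m \<omega>} \<in> sets M" using mY by measurable
      have "(\<integral>\<^sup>+\<omega>. \<rho> (\<omega>', \<omega>) * indicator S (\<omega>', \<omega>) \<partial>M) =
            (\<integral>\<^sup>+\<omega>. ennreal ?c * indicator {\<omega> \<in> space M. ?u < Y ?m \<omega> \<and> t < Y ?m \<omega>} \<omega> \<partial>M)"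
      proof (rule nn_integral_cong)
        fix \<omega> assume w: "\<omega> \<in> space M"
        have "(\<omega>', \<omega>) \<in> S \<longleftrightarrow> vec n T \<omega>' \<in> a \<and> t < Y ?m \<omega>"
          using w w' by (auto simp: S_def q_def Z space_pair_measure)
        then show "\<rho> (\<omega>', \<omega>) * indicator S (\<omega>', \<omega>) =
            ennreal ?c * indicator {\<omega> \<in> space M. ?u < Y ?m \<omega> \<and> t < Y ?m \<omega>} \<omega>"
          using w w' Fu by (auto simp: \<rho>_def indicator_def)
      qed
      also have "\<dots> = ennreal ?c * emeasure M {\<omega> \<in> space M. ?u < Y ?m \<omega> \<and> t < Y ?m \<omega>}"
        using Bs by (rule nn_integral_cmult_indicator)
      also have "emeasure M {\<omega> \<in> space M. ?u < Y ?m \<omega> \<and> t < Y ?m \<omega>} = ennreal (?F (max ?u t))"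
        by (simp add: M.emeasure_eq_measure surv_def)
      also have "ennreal ?c * ennreal (?F (max ?u t)) = ennreal (?c * ?F (max ?u t))"
        by (rule ennreal_mult[symmetric]) (use Fu F_nonneg in auto)
      also have "?c * ?F (max ?u t) = G \<omega>'"
        using Fu by (auto simp: G_def indicator_def max_def)
      finally show "(\<integral>\<^sup>+\<omega>. \<rho> (\<omega>', \<omega>) * indicator S (\<omega>', \<omega>) \<partial>M) = ennreal (G \<omega>')" .
    qed
    finally show "emeasure \<nu>1 Z = emeasure \<nu>2 Z" using e1 by simp
  qed
  have "(\<integral>\<^sup>+\<omega>'. h (vec n T \<omega>', T (Suc n) \<omega>') \<partial>M') = integral\<^sup>N \<nu>1 h"
    unfolding \<nu>1_def using mp h by (simp add: nn_integral_distr p_def)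
  also have "\<dots> = integral\<^sup>N \<nu>2 h" using eq by simp
  also have "\<dots> = (\<integral>\<^sup>+z. h (q z) \<partial>density (M' \<Otimes>\<^sub>M M) \<rho>)"
    unfolding \<nu>2_def using mq h by (simp add: nn_integral_distr)
  also have "\<dots> = (\<integral>\<^sup>+z. \<rho> z * h (q z) \<partial>(M' \<Otimes>\<^sub>M M))"
    using mrho mhq by (intro nn_integral_density)
  also have "\<dots> = (\<integral>\<^sup>+\<omega>'. \<integral>\<^sup>+\<omega>. \<rho> (\<omega>', \<omega>) * h (q (\<omega>', \<omega>)) \<partial>M \<partial>M')"
    using M.nn_integral_fst[of "\<lambda>z. \<rho> z * h (q z)" M'] mrho mhq by simp
  also have "\<dots> = (\<integral>\<^sup>+\<omega>'. \<integral>\<^sup>+\<omega>. h (vec n T \<omega>', Y (Suc n) \<omega>) * indicator {\<omega>. T n \<omega>' < Y (Suc n) \<omega>} \<omega>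
        * ennreal (1 / surv M (Y (Suc n)) (T n \<omega>')) \<partial>M \<partial>M')"
    by (simp add: \<rho>_def q_def indicator_def mult_ac)
  finally show ?thesis .
qed


lemma I:
  assumes n: "1 \<le> n" and h: "h \<in> borel_measurable (PP n \<Otimes>\<^sub>M borel)"
  shows "(\<integral>\<^sup>+\<omega>. h (vec n (replacement_times X) \<omega>, replacement_times X (Suc n) \<omega>) \<partial>M) =
    (\<integral>\<^sup>+\<omega>. \<integral>\<^sup>+\<omega>2. h (vec n (replacement_times X) \<omega>, replacement_times X n \<omega> + X (Suc n) \<omega>2) \<partial>M \<partial>M)"
proof -
  interpret M: prob_space M by (rule pM)
  let ?S = "replacement_times X"
  let ?m = "Suc n"
  let ?Q = "PiM {?m} (\<lambda>_. borel) :: (nat \<Rightarrow> real) measure"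
  define Z where "Z \<omega> = restrict (\<lambda>i. X i \<omega>) {1..n}" for \<omega>
  define W where "W \<omega> = restrict (\<lambda>i. X i \<omega>) {?m}" for \<omega>
  define sv where "sv x = restrict (\<lambda>i. \<Sum>j\<in>{1..i}. x j) {1..n}" for x :: "nat \<Rightarrow> real"
  define H where "H z = h (sv (fst z), (\<Sum>j\<in>{1..n}. fst z j) + snd z ?m)" for z :: "(nat \<Rightarrow> real) \<times> (nat \<Rightarrow> real)"
  have ind: "M.indep_var (PP n) Z ?Q W"
    unfolding Z_def W_def by (rule M.indep_var_restrict[OF indX]) auto
  have dist: "distr M (PP n) Z \<Otimes>\<^sub>M distr M ?Q W = distr M (PP n \<Otimes>\<^sub>M ?Q) (\<lambda>\<omega>. (Z \<omega>, W \<omega>))"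
    using ind by (simp add: M.indep_var_distribution_eq)
  have mZ: "Z \<in> measurable M (PP n)" unfolding Z_def by (rule measurable_restrict) (use measX in auto)
  have mW: "W \<in> measurable M ?Q" unfolding W_def by (rule measurable_restrict) (use measX in auto)
  have msv: "sv \<in> measurable (PP n) (PP n)"
    unfolding sv_def by (rule measurable_restrict) (intro borel_measurable_sum comp_meas)
  have msum: "(\<lambda>x. \<Sum>j\<in>{1..n}. x j) \<in> borel_measurable (PP n)"
    by (intro borel_measurable_sum comp_meas)
  have mc: "(\<lambda>x. x ?m) \<in> borel_measurable ?Q" by (rule comp_meas)
  have mH: "H \<in> borel_measurable (PP n \<Otimes>\<^sub>M ?Q)"
  proof -
    have "(\<lambda>z. (sv (fst z), (\<Sum>j\<in>{1..n}. fst z j) + snd z ?m)) \<in> measurable (PP n \<Otimes>\<^sub>M ?Q) (PP n \<Otimes>\<^sub>M borel)"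
      using msv msum mc by measurable
    from measurable_comp[OF this h] show ?thesis unfolding H_def[abs_def] comp_def by simp
  qed
  have pt1: "vec n ?S \<omega> = sv (Z \<omega>)" for \<omega>
    unfolding vec_def sv_def Z_def replacement_times_def
    by (intro restrict_ext sum.cong) auto
  have pt3: "?S n \<omega> = (\<Sum>j\<in>{1..n}. Z \<omega> j)" for \<omega>
    unfolding Z_def replacement_times_def by (intro sum.cong) auto
  have pt2: "?S ?m \<omega> = (\<Sum>j\<in>{1..n}. Z \<omega> j) + W \<omega> ?m" for \<omega>
    using pt3[of \<omega>] unfolding replacement_times_def W_def by simp
  interpret D2: prob_space "distr M ?Q W" using mW by (rule M.prob_space_distr)
  have mH': "H \<in> borel_measurable (distr M (PP n) Z \<Otimes>\<^sub>M distr M ?Q W)"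
    using mH by (simp cong: measurable_cong_sets)
  have "(\<integral>\<^sup>+\<omega>. h (vec n ?S \<omega>, ?S ?m \<omega>) \<partial>M) = (\<integral>\<^sup>+\<omega>. H (Z \<omega>, W \<omega>) \<partial>M)"
    by (simp add: pt1 pt2 H_def)
  also have "\<dots> = integral\<^sup>N (distr M (PP n \<Otimes>\<^sub>M ?Q) (\<lambda>\<omega>. (Z \<omega>, W \<omega>))) H"
    using mZ mW mH by (subst nn_integral_distr) (auto simp: measurable_pair_iff)
  also have "\<dots> = integral\<^sup>N (distr M (PP n) Z \<Otimes>\<^sub>M distr M ?Q W) H"
    by (simp only: dist)
  also have "\<dots> = (\<integral>\<^sup>+x. \<integral>\<^sup>+y. H (x, y) \<partial>distr M ?Q W \<partial>distr M (PP n) Z)"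
    by (rule D2.nn_integral_fst[symmetric, OF mH'])
  also have "\<dots> = (\<integral>\<^sup>+\<omega>. \<integral>\<^sup>+y. H (Z \<omega>, y) \<partial>distr M ?Q W \<partial>M)"
  proof (rule nn_integral_distr[OF mZ])
    show "(\<lambda>x. \<integral>\<^sup>+y. H (x, y) \<partial>distr M ?Q W) \<in> borel_measurable (distr M (PP n) Z)"
      using D2.borel_measurable_nn_integral_fst[OF mH'] by simp
  qed
  also have "\<dots> = (\<integral>\<^sup>+\<omega>. \<integral>\<^sup>+\<omega>2. H (Z \<omega>, W \<omega>2) \<partial>M \<partial>M)"
  proof (rule nn_integral_cong)
    fix \<omega> assume w: "\<omega> \<in> space M"
    have "Z \<omega> \<in> space (PP n)" using mZ w by (auto simp: measurable_def)
    then have "(\<lambda>y. H (Z \<omega>, y)) \<in> borel_measurable ?Q"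
      using measurable_comp[OF measurable_Pair1'[of "Z \<omega>" "PP n" ?Q] mH] by (simp add: comp_def)
    then show "(\<integral>\<^sup>+y. H (Z \<omega>, y) \<partial>distr M ?Q W) = (\<integral>\<^sup>+\<omega>2. H (Z \<omega>, W \<omega>2) \<partial>M)"
      using mW by (simp add: nn_integral_distr)
  qed
  also have "\<dots> = (\<integral>\<^sup>+\<omega>. \<integral>\<^sup>+\<omega>2. h (vec n ?S \<omega>, ?S n \<omega> + X ?m \<omega>2) \<partial>M \<partial>M)"
    by (simp add: pt1 pt3 H_def W_def)
  finally show ?thesis .
qed


lemma condmeas:
  assumes m: "1 \<le> m" and u: "0 < u"
  defines "\<mu> \<equiv> distr (density M (\<lambda>\<omega>. indicator {\<omega>. u < Y m \<omega>} \<omega> * ennreal (1 / surv M (Y m) u))) borel (Y m)"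
  shows "sets \<mu> = sets borel" "finite_measure \<mu>"
    "\<And>s. emeasure \<mu> {s<..} = ennreal (measure M {\<omega>\<in>space M. Y m \<omega> - u > s - u \<and> Y m \<omega> > u} / measure M {\<omega>\<in>space M. Y m \<omega> > u})"
    "\<And>g. g \<in> borel_measurable borel \<Longrightarrow> (\<integral>\<^sup>+x. g x \<partial>\<mu>) =
        (\<integral>\<^sup>+\<omega>. g (Y m \<omega>) * indicator {\<omega>. u < Y m \<omega>} \<omega> * ennreal (1 / surv M (Y m) u) \<partial>M)"
proof -
  interpret M: prob_space M by (rule pM)
  have mY: "Y m \<in> borel_measurable M" using measY m by simp
  let ?d = "\<lambda>\<omega>. indicator {\<omega>. u < Y m \<omega>} \<omega> * ennreal (1 / surv M (Y m) u)"
  have md: "?d \<in> borel_measurable M" using mY by measurable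
  show "sets \<mu> = sets borel" unfolding \<mu>_def by simp
  have Fu: "0 < surv M (Y m) u" using posF m u by auto
  have em: "emeasure \<mu> A = ennreal (1 / surv M (Y m) u) * emeasure M {\<omega>\<in>space M. u < Y m \<omega> \<and> Y m \<omega> \<in> A}"
    if A: "A \<in> sets borel" for A
  proof -
    have "emeasure \<mu> A = emeasure (density M ?d) (Y m -` A \<inter> space M)"
      unfolding \<mu>_def using mY A by (simp add: emeasure_distr)
    also have "\<dots> = (\<integral>\<^sup>+\<omega>. ?d \<omega> * indicator (Y m -` A \<inter> space M) \<omega> \<partial>M)"
      using md mY A by (intro emeasure_density) auto
    also have "\<dots> = (\<integral>\<^sup>+\<omega>. ennreal (1 / surv M (Y m) u) * indicator {\<omega>\<in>space M. u < Y m \<omega> \<and> Y m \<omega> \<in> A} \<omega> \<partial>M)"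
      by (intro nn_integral_cong) (auto simp: indicator_def)
    also have "\<dots> = ennreal (1 / surv M (Y m) u) * emeasure M {\<omega>\<in>space M. u < Y m \<omega> \<and> Y m \<omega> \<in> A}"
    proof (rule nn_integral_cmult_indicator)
      have "{\<omega>\<in>space M. u < Y m \<omega> \<and> Y m \<omega> \<in> A} = {\<omega>\<in>space M. u < Y m \<omega>} \<inter> (Y m -` A \<inter> space M)" by auto
      moreover have "{\<omega>\<in>space M. u < Y m \<omega>} \<in> sets M" using mY by measurable
      moreover have "Y m -` A \<inter> space M \<in> sets M" using mY A by (rule measurable_sets)
      ultimately show "{\<omega>\<in>space M. u < Y m \<omega> \<and> Y m \<omega> \<in> A} \<in> sets M" by auto
    qed
    finally show ?thesis .
  qed
  have "emeasure \<mu> (space \<mu>) \<noteq> \<infinity>"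
  proof -
    have "space \<mu> = UNIV" unfolding \<mu>_def by simp
    then have "emeasure \<mu> (space \<mu>) = ennreal (1 / surv M (Y m) u) * emeasure M {\<omega>\<in>space M. u < Y m \<omega> \<and> Y m \<omega> \<in> UNIV}"
      using em[of UNIV] by simp
    also have "\<dots> = ennreal (1 / surv M (Y m) u) * ennreal (measure M {\<omega>\<in>space M. u < Y m \<omega> \<and> Y m \<omega> \<in> UNIV})"
      by (simp add: M.emeasure_eq_measure)
    finally show ?thesis by (simp add: ennreal_mult_eq_top_iff)
  qed
  then show "finite_measure \<mu>" by (rule finite_measureI)
  fix s :: real
  have "emeasure \<mu> {s<..} = ennreal (1 / surv M (Y m) u) * ennreal (measure M {\<omega>\<in>space M. u < Y m \<omega> \<and> Y m \<omega> \<in> {s<..}})"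
    using em[of "{s<..}"] by (simp add: M.emeasure_eq_measure)
  also have "\<dots> = ennreal (1 / surv M (Y m) u * measure M {\<omega>\<in>space M. u < Y m \<omega> \<and> Y m \<omega> \<in> {s<..}})"
    by (rule ennreal_mult[symmetric]) (use Fu in auto)
  also have "{\<omega>\<in>space M. u < Y m \<omega> \<and> Y m \<omega> \<in> {s<..}} = {\<omega>\<in>space M. Y m \<omega> - u > s - u \<and> Y m \<omega> > u}"
    by auto
  finally show "emeasure \<mu> {s<..} = ennreal (measure M {\<omega>\<in>space M. Y m \<omega> - u > s - u \<and> Y m \<omega> > u} / measure M {\<omega>\<in>space M. Y m \<omega> > u})"
    by (simp add: surv_def)
next
  fix g :: "real \<Rightarrow> ennreal" assume g: "g \<in> borel_measurable borel"
  have mY: "Y m \<in> borel_measurable M" using measY m by simp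
  let ?d = "\<lambda>\<omega>. indicator {\<omega>. u < Y m \<omega>} \<omega> * ennreal (1 / surv M (Y m) u)"
  have md: "?d \<in> borel_measurable M" using mY by measurable
  have "(\<integral>\<^sup>+x. g x \<partial>\<mu>) = (\<integral>\<^sup>+\<omega>. g (Y m \<omega>) \<partial>density M ?d)"
    unfolding \<mu>_def using mY g by (simp add: nn_integral_distr)
  also have "\<dots> = (\<integral>\<^sup>+\<omega>. ?d \<omega> * g (Y m \<omega>) \<partial>M)"
  proof (rule nn_integral_density[OF md])
    show "(\<lambda>\<omega>. g (Y m \<omega>)) \<in> borel_measurable M" using measurable_comp[OF mY g] by (simp add: comp_def)
  qed
  finally show "(\<integral>\<^sup>+x. g x \<partial>\<mu>) =
        (\<integral>\<^sup>+\<omega>. g (Y m \<omega>) * indicator {\<omega>. u < Y m \<omega>} \<omega> * ennreal (1 / surv M (Y m) u) \<partial>M)"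
    by (simp add: mult_ac)
qed

lemma shiftmeas:
  fixes u :: real
  assumes m: "1 \<le> m"
  defines "\<nu> \<equiv> distr M borel (\<lambda>\<omega>. u + X m \<omega>)"
  shows "sets \<nu> = sets borel" "finite_measure \<nu>"
    "\<And>s. emeasure \<nu> {s<..} = ennreal (measure M {\<omega>\<in>space M. X m \<omega> > s - u})"
    "\<And>g. g \<in> borel_measurable borel \<Longrightarrow> (\<integral>\<^sup>+x. g x \<partial>\<nu>) = (\<integral>\<^sup>+\<omega>. g (u + X m \<omega>) \<partial>M)"
proof -
  interpret M: prob_space M by (rule pM)
  have mX: "(\<lambda>\<omega>. u + X m \<omega>) \<in> borel_measurable M" using measX m by simp
  show "sets \<nu> = sets borel" unfolding \<nu>_def by simp
  interpret N: prob_space \<nu> unfolding \<nu>_def using mX by (rule M.prob_space_distr)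
  show "finite_measure \<nu>" by (rule N.finite_measure_axioms)
  fix s :: real
  have "emeasure \<nu> {s<..} = emeasure M ((\<lambda>\<omega>. u + X m \<omega>) -` {s<..} \<inter> space M)"
    unfolding \<nu>_def using mX by (simp add: emeasure_distr)
  also have "(\<lambda>\<omega>. u + X m \<omega>) -` {s<..} \<inter> space M = {\<omega>\<in>space M. X m \<omega> > s - u}" by auto
  finally show "emeasure \<nu> {s<..} = ennreal (measure M {\<omega>\<in>space M. X m \<omega> > s - u})"
    by (simp add: M.emeasure_eq_measure)
next
  fix g :: "real \<Rightarrow> ennreal" assume g: "g \<in> borel_measurable borel"
  have mX: "(\<lambda>\<omega>. u + X m \<omega>) \<in> borel_measurable M" using measX m by simp
  show "(\<integral>\<^sup>+x. g x \<partial>\<nu>) = (\<integral>\<^sup>+\<omega>. g (u + X m \<omega>) \<partial>M)"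
    unfolding \<nu>_def using mX g by (simp add: nn_integral_distr)
qed

lemma cond1:
  assumes m: "2 \<le> m" and u: "0 < u" and g: "g \<in> borel_measurable borel" and mono: "mono g"
    and b: "\<forall>s. measure M {\<omega>\<in>space M. Y m \<omega> - u > s \<and> Y m \<omega> > u} / measure M {\<omega>\<in>space M. Y m \<omega> > u}
           \<le> measure M {\<omega>\<in>space M. X m \<omega> > s}"
  shows "(\<integral>\<^sup>+\<omega>. g (Y m \<omega>) * indicator {\<omega>. u < Y m \<omega>} \<omega> * ennreal (1 / surv M (Y m) u) \<partial>M)
     \<le> (\<integral>\<^sup>+\<omega>. g (u + X m \<omega>) \<partial>M)"
proof -
  have m1: "1 \<le> m" using m by simp
  note C = condmeas[OF m1 u] and S = shiftmeas[OF m1, where u = u]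
  have "(\<integral>\<^sup>+x. g x \<partial>distr (density M (\<lambda>\<omega>. indicator {\<omega>. u < Y m \<omega>} \<omega> * ennreal (1 / surv M (Y m) u))) borel (Y m))
      \<le> (\<integral>\<^sup>+x. g x \<partial>distr M borel (\<lambda>\<omega>. u + X m \<omega>))"
  proof (rule oneD[OF C(1) S(1) C(2) S(2) _ g mono])
    fix s
    show "emeasure (distr (density M (\<lambda>\<omega>. indicator {\<omega>. u < Y m \<omega>} \<omega> * ennreal (1 / surv M (Y m) u))) borel (Y m)) {s<..}
      \<le> emeasure (distr M borel (\<lambda>\<omega>. u + X m \<omega>)) {s<..}"
      unfolding C(3) S(3) using b by (intro ennreal_leI) blast
  qed
  then show ?thesis unfolding C(4)[OF g] S(4)[OF g] .
qed

lemma cond2: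
  assumes m: "2 \<le> m" and u: "0 < u" and g: "g \<in> borel_measurable borel" and mono: "mono g"
    and b: "\<forall>s. measure M {\<omega>\<in>space M. X m \<omega> > s} \<le>
           measure M {\<omega>\<in>space M. Y m \<omega> - u > s \<and> Y m \<omega> > u} / measure M {\<omega>\<in>space M. Y m \<omega> > u}"
  shows "(\<integral>\<^sup>+\<omega>. g (u + X m \<omega>) \<partial>M) \<le>
     (\<integral>\<^sup>+\<omega>. g (Y m \<omega>) * indicator {\<omega>. u < Y m \<omega>} \<omega> * ennreal (1 / surv M (Y m) u) \<partial>M)"
proof -
  have m1: "1 \<le> m" using m by simp
  note C = condmeas[OF m1 u] and S = shiftmeas[OF m1, where u = u]
  have "(\<integral>\<^sup>+x. g x \<partial>distr M borel (\<lambda>\<omega>. u + X m \<omega>)) \<le>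
      (\<integral>\<^sup>+x. g x \<partial>distr (density M (\<lambda>\<omega>. indicator {\<omega>. u < Y m \<omega>} \<omega> * ennreal (1 / surv M (Y m) u))) borel (Y m))"
  proof (rule oneD[OF S(1) C(1) S(2) C(2) _ g mono])
    fix s
    show "emeasure (distr M borel (\<lambda>\<omega>. u + X m \<omega>)) {s<..} \<le>
      emeasure (distr (density M (\<lambda>\<omega>. indicator {\<omega>. u < Y m \<omega>} \<omega> * ennreal (1 / surv M (Y m) u))) borel (Y m)) {s<..}"
      unfolding C(3) S(3) using b by (intro ennreal_leI) blast
  qed
  then show ?thesis unfolding C(4)[OF g] S(4)[OF g] .
qed


lemma vec_n: "1 \<le> n \<Longrightarrow> vec n V \<omega> n = V n \<omega>"
  by (simp add: vec_def)

lemma vec_1: "vec 1 V \<omega> = restrict (\<lambda>_. V 1 \<omega>) {1}"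
  by (simp add: vec_def fun_eq_iff restrict_def)

lemma S1: "replacement_times X 1 \<omega> = X 1 \<omega>"
  by (simp add: replacement_times_def)

lemma h_meas:
  assumes f: "f \<in> borel_measurable (PP (Suc n))"
  shows "(\<lambda>z. f (join n (fst z) (snd z))) \<in> borel_measurable (PP n \<Otimes>\<^sub>M borel)"
  using measurable_comp[OF join_meas f] by (simp add: comp_def)

lemma h_slice:
  assumes h: "h \<in> borel_measurable (PP n \<Otimes>\<^sub>M borel)" and x: "x \<in> space (PP n)"
  shows "(\<lambda>y. h (x, y)) \<in> borel_measurable borel"
  using measurable_comp[OF measurable_Pair1'[OF x] h] by (simp add: comp_def)

lemma psi_meas:
  assumes h: "h \<in> borel_measurable (PP n \<Otimes>\<^sub>M borel)" and m: "1 \<le> m"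
  shows "(\<lambda>x. \<integral>\<^sup>+\<omega>2. h (x, x n + X m \<omega>2) \<partial>M) \<in> borel_measurable (PP n)"
proof -
  interpret M: prob_space M by (rule pM)
  have mX: "X m \<in> borel_measurable M" using measX m by simp
  have "(\<lambda>z. (fst z, fst z n + X m (snd z))) \<in> measurable (PP n \<Otimes>\<^sub>M M) (PP n \<Otimes>\<^sub>M borel)"
    using mX comp_meas[of n "{1..n}"] by measurable
  from measurable_comp[OF this h] have "(\<lambda>z. h (fst z, fst z n + X m (snd z))) \<in> borel_measurable (PP n \<Otimes>\<^sub>M M)"
    by (simp add: comp_def)
  from M.borel_measurable_nn_integral_fst[OF this] show ?thesis by simp
qed

lemma mono_base:
  assumes mono: "\<forall>x\<in>space (PP 1). \<forall>y\<in>space (PP 1). (\<forall>i\<in>{1..1}. x i \<le> y i) \<longrightarrow> f x \<le> f y"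
  shows "mono (\<lambda>y. f (restrict (\<lambda>_. y) {1}))"
proof (rule monoI)
  fix a b :: real assume "a \<le> b"
  then show "f (restrict (\<lambda>_. a) {1}) \<le> f (restrict (\<lambda>_. b) {1})"
    using mono by (auto simp: space_PiM)
qed

lemma meas_base:
  assumes f: "f \<in> borel_measurable (PP 1)"
  shows "(\<lambda>y. f (restrict (\<lambda>_. y) {1})) \<in> borel_measurable borel"
proof -
  have e: "{1..1::nat} = {1}" by simp
  have "(\<lambda>y::real. restrict (\<lambda>_. y) {1::nat}) \<in> measurable borel (PiM {1} (\<lambda>_. borel))"
    by (rule measurable_restrict) auto
  then have "(\<lambda>y::real. restrict (\<lambda>_. y) {1::nat}) \<in> measurable borel (PP 1)" unfolding e .
  from measurable_comp[OF this f] show ?thesis by (simp add: comp_def)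
qed

lemma base_le:
  fixes f :: "(nat \<Rightarrow> real) \<Rightarrow> ennreal"
  assumes f: "f \<in> borel_measurable (PP 1)"
    and mono: "\<forall>x\<in>space (PP 1). \<forall>y\<in>space (PP 1). (\<forall>i\<in>{1..1}. x i \<le> y i) \<longrightarrow> f x \<le> f y"
  shows "(\<integral>\<^sup>+\<omega>'. f (vec 1 T \<omega>') \<partial>M') = (\<integral>\<^sup>+x. f (restrict (\<lambda>_. x) {1}) \<partial>distr M' borel (T 1))"
    "(\<integral>\<^sup>+\<omega>. f (vec 1 (replacement_times X) \<omega>) \<partial>M) = (\<integral>\<^sup>+x. f (restrict (\<lambda>_. x) {1}) \<partial>distr M borel (X 1))"
    "sets (distr M' borel (T 1)) = sets borel" "sets (distr M borel (X 1)) = sets borel"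
    "finite_measure (distr M' borel (T 1))" "finite_measure (distr M borel (X 1))"
    "\<And>s. emeasure (distr M' borel (T 1)) {s<..} = ennreal (measure M {\<omega>\<in>space M. s < Y 1 \<omega>})"
    "\<And>s. emeasure (distr M borel (X 1)) {s<..} = ennreal (measure M {\<omega>\<in>space M. s < X 1 \<omega>})"
proof -
  interpret M: prob_space M by (rule pM)
  interpret M': prob_space M' by (rule pM')
  have mT: "T 1 \<in> borel_measurable M'" using measT by simp
  have mX: "X 1 \<in> borel_measurable M" using measX by simp
  have g: "(\<lambda>y. f (restrict (\<lambda>_. y) {1})) \<in> borel_measurable borel" by (rule meas_base[OF f])
  show "(\<integral>\<^sup>+\<omega>'. f (vec 1 T \<omega>') \<partial>M') = (\<integral>\<^sup>+x. f (restrict (\<lambda>_. x) {1}) \<partial>distr M' borel (T 1))"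
    unfolding vec_1 using mT g by (simp add: nn_integral_distr)
  show "(\<integral>\<^sup>+\<omega>. f (vec 1 (replacement_times X) \<omega>) \<partial>M) = (\<integral>\<^sup>+x. f (restrict (\<lambda>_. x) {1}) \<partial>distr M borel (X 1))"
    unfolding vec_1 S1 using mX g by (simp add: nn_integral_distr)
  show "sets (distr M' borel (T 1)) = sets borel" "sets (distr M borel (X 1)) = sets borel" by simp_all
  interpret D1: prob_space "distr M' borel (T 1)" using mT by (rule M'.prob_space_distr)
  interpret D2: prob_space "distr M borel (X 1)" using mX by (rule M.prob_space_distr)
  show "finite_measure (distr M' borel (T 1))" "finite_measure (distr M borel (X 1))"
    by (rule D1.finite_measure_axioms, rule D2.finite_measure_axioms)
  fix s :: real
  have "emeasure (distr M' borel (T 1)) {s<..} = emeasure M' {\<omega>\<in>space M'. T 1 \<omega> > s}"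
    using mT by (simp add: emeasure_distr vimage_def Int_def conj_commute)
  also have "\<dots> = ennreal (surv M (Y 1) s)"
    using rel by (simp add: M'.emeasure_eq_measure relevation_process_def)
  finally show "emeasure (distr M' borel (T 1)) {s<..} = ennreal (measure M {\<omega>\<in>space M. s < Y 1 \<omega>})"
    by (simp add: surv_def)
  show "emeasure (distr M borel (X 1)) {s<..} = ennreal (measure M {\<omega>\<in>space M. s < X 1 \<omega>})"
    using mX by (simp add: emeasure_distr vimage_def Int_def conj_commute M.emeasure_eq_measure)
qed

lemma step_facts:
  fixes f :: "(nat \<Rightarrow> real) \<Rightarrow> ennreal"
  assumes n: "1 \<le> n" and f: "f \<in> borel_measurable (PP (Suc n))"
    and mono: "\<forall>x\<in>space (PP (Suc n)). \<forall>y\<in>space (PP (Suc n)). (\<forall>i\<in>{1..Suc n}. x i \<le> y i) \<longrightarrow> f x \<le> f y"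
  defines "h \<equiv> \<lambda>z. f (join n (fst z) (snd z))"
  defines "\<psi> \<equiv> \<lambda>x. \<integral>\<^sup>+\<omega>2. h (x, x n + X (Suc n) \<omega>2) \<partial>M"
  shows "(\<integral>\<^sup>+\<omega>'. f (vec (Suc n) T \<omega>') \<partial>M') =
    (\<integral>\<^sup>+\<omega>'. \<integral>\<^sup>+\<omega>. h (vec n T \<omega>', Y (Suc n) \<omega>) * indicator {\<omega>. T n \<omega>' < Y (Suc n) \<omega>} \<omega>
        * ennreal (1 / surv M (Y (Suc n)) (T n \<omega>')) \<partial>M \<partial>M')"
    "(\<integral>\<^sup>+\<omega>. f (vec (Suc n) (replacement_times X) \<omega>) \<partial>M) = (\<integral>\<^sup>+\<omega>. \<psi> (vec n (replacement_times X) \<omega>) \<partial>M)"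
    "\<psi> \<in> borel_measurable (PP n)"
    "\<forall>x\<in>space (PP n). \<forall>y\<in>space (PP n). (\<forall>i\<in>{1..n}. x i \<le> y i) \<longrightarrow> \<psi> x \<le> \<psi> y"
    "\<And>\<omega>'. \<omega>' \<in> space M' \<Longrightarrow> (\<lambda>y. h (vec n T \<omega>', y)) \<in> borel_measurable borel"
    "\<And>\<omega>'. mono (\<lambda>y. h (vec n T \<omega>', y))"
    "\<And>\<omega>'. \<psi> (vec n T \<omega>') = (\<integral>\<^sup>+\<omega>2. h (vec n T \<omega>', T n \<omega>' + X (Suc n) \<omega>2) \<partial>M)"
proof -
  have mh: "h \<in> borel_measurable (PP n \<Otimes>\<^sub>M borel)" unfolding h_def by (rule h_meas[OF f])
  show "(\<integral>\<^sup>+\<omega>'. f (vec (Suc n) T \<omega>') \<partial>M') =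
    (\<integral>\<^sup>+\<omega>'. \<integral>\<^sup>+\<omega>. h (vec n T \<omega>', Y (Suc n) \<omega>) * indicator {\<omega>. T n \<omega>' < Y (Suc n) \<omega>} \<omega>
        * ennreal (1 / surv M (Y (Suc n)) (T n \<omega>')) \<partial>M \<partial>M')"
    using K[OF n mh] by (simp add: vec_Suc h_def)
  show "(\<integral>\<^sup>+\<omega>. f (vec (Suc n) (replacement_times X) \<omega>) \<partial>M) = (\<integral>\<^sup>+\<omega>. \<psi> (vec n (replacement_times X) \<omega>) \<partial>M)"
    using I[OF n mh] by (simp add: vec_Suc h_def \<psi>_def vec_n[OF n])
  show "\<psi> \<in> borel_measurable (PP n)" unfolding \<psi>_def by (rule psi_meas[OF mh]) simp
  have hmono: "h (x, a) \<le> h (y, b)" if "x \<in> space (PP n)" "y \<in> space (PP n)" "\<forall>i\<in>{1..n}. x i \<le> y i" "a \<le> b" for x y a b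
    unfolding h_def using mono join_space join_mono[OF that(3,4)] by simp
  show "\<forall>x\<in>space (PP n). \<forall>y\<in>space (PP n). (\<forall>i\<in>{1..n}. x i \<le> y i) \<longrightarrow> \<psi> x \<le> \<psi> y"
  proof (intro ballI impI)
    fix x y assume xy: "x \<in> space (PP n)" "y \<in> space (PP n)" "\<forall>i\<in>{1..n}. x i \<le> y i"
    then have "x n \<le> y n" using n by auto
    then show "\<psi> x \<le> \<psi> y" unfolding \<psi>_def
      by (intro nn_integral_mono hmono[OF xy]) simp
  qed
  show "\<And>\<omega>'. \<omega>' \<in> space M' \<Longrightarrow> (\<lambda>y. h (vec n T \<omega>', y)) \<in> borel_measurable borel"
    by (rule h_slice[OF mh vec_space])
  show "\<And>\<omega>'. mono (\<lambda>y. h (vec n T \<omega>', y))"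
    by (rule monoI, rule hmono[OF vec_space vec_space]) auto
  show "\<And>\<omega>'. \<psi> (vec n T \<omega>') = (\<integral>\<^sup>+\<omega>2. h (vec n T \<omega>', T n \<omega>' + X (Suc n) \<omega>2) \<partial>M)"
    unfolding \<psi>_def by (simp add: vec_n[OF n])
qed

lemma core1:
  fixes f :: "(nat \<Rightarrow> real) \<Rightarrow> ennreal"
  assumes a: "st_le M (Y 1) M (X 1)"
    and b: "\<forall>n\<ge>2. \<forall>t>0. \<forall>s. measure M {\<omega>\<in>space M. Y n \<omega> - t > s \<and> Y n \<omega> > t} / measure M {\<omega>\<in>space M. Y n \<omega> > t}
           \<le> measure M {\<omega>\<in>space M. X n \<omega> > s}"
    and n: "1 \<le> n"
  shows "\<forall>f. f \<in> borel_measurable (PP n) \<longrightarrow>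
    (\<forall>x\<in>space (PP n). \<forall>y\<in>space (PP n). (\<forall>i\<in>{1..n}. x i \<le> y i) \<longrightarrow> f x \<le> f y) \<longrightarrow>
    (\<integral>\<^sup>+\<omega>'. f (vec n T \<omega>') \<partial>M') \<le> (\<integral>\<^sup>+\<omega>. f (vec n (replacement_times X) \<omega>) \<partial>M)"
  using n
proof (induct n rule: nat_induct_at_least)
  case base
  show ?case
  proof (intro allI impI)
    fix f :: "(nat \<Rightarrow> real) \<Rightarrow> ennreal"
    assume f: "f \<in> borel_measurable (PP 1)"
      and mono: "\<forall>x\<in>space (PP 1). \<forall>y\<in>space (PP 1). (\<forall>i\<in>{1..1}. x i \<le> y i) \<longrightarrow> f x \<le> f y"
    note B = base_le[OF f mono]
    show "(\<integral>\<^sup>+\<omega>'. f (vec 1 T \<omega>') \<partial>M') \<le> (\<integral>\<^sup>+\<omega>. f (vec 1 (replacement_times X) \<omega>) \<partial>M)"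
      unfolding B(1,2)
    proof (rule oneD[OF B(3,4,5,6) _ meas_base[OF f] mono_base[OF mono]])
      fix s show "emeasure (distr M' borel (T 1)) {s<..} \<le> emeasure (distr M borel (X 1)) {s<..}"
        unfolding B(7,8) using a by (intro ennreal_leI) (simp add: st_le_def)
    qed
  qed
next
  case (Suc n)
  show ?case
  proof (intro allI impI)
    fix f :: "(nat \<Rightarrow> real) \<Rightarrow> ennreal"
    assume f: "f \<in> borel_measurable (PP (Suc n))"
      and mono: "\<forall>x\<in>space (PP (Suc n)). \<forall>y\<in>space (PP (Suc n)). (\<forall>i\<in>{1..Suc n}. x i \<le> y i) \<longrightarrow> f x \<le> f y"
    note F = step_facts[OF Suc(1) f mono]
    let ?h = "\<lambda>z. f (join n (fst z) (snd z))"
    let ?\<psi> = "\<lambda>x. \<integral>\<^sup>+\<omega>2. ?h (x, x n + X (Suc n) \<omega>2) \<partial>M"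
    have "(\<integral>\<^sup>+\<omega>'. f (vec (Suc n) T \<omega>') \<partial>M') \<le> (\<integral>\<^sup>+\<omega>'. ?\<psi> (vec n T \<omega>') \<partial>M')"
      unfolding F(1)
    proof (rule nn_integral_mono)
      fix \<omega>' assume w: "\<omega>' \<in> space M'"
      have u: "0 < T n \<omega>'" using Tpos[OF w Suc(1)] .
      have m: "2 \<le> Suc n" using Suc(1) by simp
      show "(\<integral>\<^sup>+\<omega>. ?h (vec n T \<omega>', Y (Suc n) \<omega>) * indicator {\<omega>. T n \<omega>' < Y (Suc n) \<omega>} \<omega>
        * ennreal (1 / surv M (Y (Suc n)) (T n \<omega>')) \<partial>M) \<le> ?\<psi> (vec n T \<omega>')"
        unfolding F(7) using cond1[OF m u F(5)[OF w] F(6)] b m u by blast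
    qed
    also have "\<dots> \<le> (\<integral>\<^sup>+\<omega>. ?\<psi> (vec n (replacement_times X) \<omega>) \<partial>M)"
      using Suc(2) F(3,4) by blast
    also have "\<dots> = (\<integral>\<^sup>+\<omega>. f (vec (Suc n) (replacement_times X) \<omega>) \<partial>M)"
      using F(2) by simp
    finally show "(\<integral>\<^sup>+\<omega>'. f (vec (Suc n) T \<omega>') \<partial>M') \<le> (\<integral>\<^sup>+\<omega>. f (vec (Suc n) (replacement_times X) \<omega>) \<partial>M)" .
  qed
qed

lemma core2:
  fixes f :: "(nat \<Rightarrow> real) \<Rightarrow> ennreal"
  assumes a: "st_le M (X 1) M (Y 1)"
    and b: "\<forall>n\<ge>2. \<forall>t>0. \<forall>s. measure M {\<omega>\<in>space M. X n \<omega> > s}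
           \<le> measure M {\<omega>\<in>space M. Y n \<omega> - t > s \<and> Y n \<omega> > t} / measure M {\<omega>\<in>space M. Y n \<omega> > t}"
    and n: "1 \<le> n"
  shows "\<forall>f. f \<in> borel_measurable (PP n) \<longrightarrow>
    (\<forall>x\<in>space (PP n). \<forall>y\<in>space (PP n). (\<forall>i\<in>{1..n}. x i \<le> y i) \<longrightarrow> f x \<le> f y) \<longrightarrow>
    (\<integral>\<^sup>+\<omega>. f (vec n (replacement_times X) \<omega>) \<partial>M) \<le> (\<integral>\<^sup>+\<omega>'. f (vec n T \<omega>') \<partial>M')"
  using n
proof (induct n rule: nat_induct_at_least)
  case base
  show ?case
  proof (intro allI impI)
    fix f :: "(nat \<Rightarrow> real) \<Rightarrow> ennreal"
    assume f: "f \<in> borel_measurable (PP 1)"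
      and mono: "\<forall>x\<in>space (PP 1). \<forall>y\<in>space (PP 1). (\<forall>i\<in>{1..1}. x i \<le> y i) \<longrightarrow> f x \<le> f y"
    note B = base_le[OF f mono]
    show "(\<integral>\<^sup>+\<omega>. f (vec 1 (replacement_times X) \<omega>) \<partial>M) \<le> (\<integral>\<^sup>+\<omega>'. f (vec 1 T \<omega>') \<partial>M')"
      unfolding B(1,2)
    proof (rule oneD[OF B(4,3,6,5) _ meas_base[OF f] mono_base[OF mono]])
      fix s show "emeasure (distr M borel (X 1)) {s<..} \<le> emeasure (distr M' borel (T 1)) {s<..}"
        unfolding B(7,8) using a by (intro ennreal_leI) (simp add: st_le_def)
    qed
  qed
next
  case (Suc n)
  show ?case
  proof (intro allI impI)
    fix f :: "(nat \<Rightarrow> real) \<Rightarrow> ennreal"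
    assume f: "f \<in> borel_measurable (PP (Suc n))"
      and mono: "\<forall>x\<in>space (PP (Suc n)). \<forall>y\<in>space (PP (Suc n)). (\<forall>i\<in>{1..Suc n}. x i \<le> y i) \<longrightarrow> f x \<le> f y"
    note F = step_facts[OF Suc(1) f mono]
    let ?h = "\<lambda>z. f (join n (fst z) (snd z))"
    let ?\<psi> = "\<lambda>x. \<integral>\<^sup>+\<omega>2. ?h (x, x n + X (Suc n) \<omega>2) \<partial>M"
    have "(\<integral>\<^sup>+\<omega>. f (vec (Suc n) (replacement_times X) \<omega>) \<partial>M) = (\<integral>\<^sup>+\<omega>. ?\<psi> (vec n (replacement_times X) \<omega>) \<partial>M)"
      using F(2) by simp
    also have "\<dots> \<le> (\<integral>\<^sup>+\<omega>'. ?\<psi> (vec n T \<omega>') \<partial>M')"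
      using Suc(2) F(3,4) by blast
    also have "\<dots> \<le> (\<integral>\<^sup>+\<omega>'. f (vec (Suc n) T \<omega>') \<partial>M')"
      unfolding F(1)
    proof (rule nn_integral_mono)
      fix \<omega>' assume w: "\<omega>' \<in> space M'"
      have u: "0 < T n \<omega>'" using Tpos[OF w Suc(1)] .
      have m: "2 \<le> Suc n" using Suc(1) by simp
      show "?\<psi> (vec n T \<omega>') \<le> (\<integral>\<^sup>+\<omega>. ?h (vec n T \<omega>', Y (Suc n) \<omega>) * indicator {\<omega>. T n \<omega>' < Y (Suc n) \<omega>} \<omega>
        * ennreal (1 / surv M (Y (Suc n)) (T n \<omega>')) \<partial>M)"
        unfolding F(7) using cond2[OF m u F(5)[OF w] F(6)] b m u by blast
    qed
    finally show "(\<integral>\<^sup>+\<omega>. f (vec (Suc n) (replacement_times X) \<omega>) \<partial>M) \<le> (\<integral>\<^sup>+\<omega>'. f (vec (Suc n) T \<omega>') \<partial>M')" .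
  qed
qed

end


lemma trunc_lim:
  fixes g :: "'a \<Rightarrow> real"
  assumes int: "integrable A g"
  shows "(\<lambda>c::nat. \<integral>\<omega>. max (g \<omega>) (- real c) \<partial>A) \<longlonglongrightarrow> (\<integral>\<omega>. g \<omega> \<partial>A)"
proof (rule integral_dominated_convergence[where w = "\<lambda>\<omega>. \<bar>g \<omega>\<bar>"])
  show mg: "g \<in> borel_measurable A" using int by (rule borel_measurable_integrable)
  show "(\<lambda>\<omega>. max (g \<omega>) (- real c)) \<in> borel_measurable A" for c using mg by measurable
  show "integrable A (\<lambda>\<omega>. \<bar>g \<omega>\<bar>)" using int by (rule integrable_abs)
  show "AE \<omega> in A. (\<lambda>c. max (g \<omega>) (- real c)) \<longlonglongrightarrow> g \<omega>"
  proof (rule AE_I2)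
    fix \<omega>
    obtain N :: nat where N: "- g \<omega> \<le> real N" using real_arch_simple by blast
    have "eventually (\<lambda>c. max (g \<omega>) (- real c) = g \<omega>) sequentially"
    proof (rule eventually_sequentiallyI[of N])
      fix c assume "N \<le> c"
      then have "real N \<le> real c" by simp
      then show "max (g \<omega>) (- real c) = g \<omega>" using N by simp
    qed
    then show "(\<lambda>c. max (g \<omega>) (- real c)) \<longlonglongrightarrow> g \<omega>" by (rule tendsto_eventually)
  qed
  show "AE \<omega> in A. norm (max (g \<omega>) (- real c)) \<le> \<bar>g \<omega>\<bar>" for c by auto
qed

lemma vec_from_nn:
  fixes A :: "'a measure" and B :: "'b measure" and V :: "nat \<Rightarrow> 'a \<Rightarrow> real" and W :: "nat \<Rightarrow> 'b \<Rightarrow> real"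
  assumes pA: "prob_space A" and pB: "prob_space B"
    and mV: "vec n V \<in> measurable A (PP n)" and mW: "vec n W \<in> measurable B (PP n)"
    and core: "\<forall>f. f \<in> borel_measurable (PP n) \<longrightarrow>
      (\<forall>x\<in>space (PP n). \<forall>y\<in>space (PP n). (\<forall>i\<in>{1..n}. x i \<le> y i) \<longrightarrow> f x \<le> f y) \<longrightarrow>
      (\<integral>\<^sup>+\<omega>. f (vec n V \<omega>) \<partial>A) \<le> (\<integral>\<^sup>+\<omega>. f (vec n W \<omega>) \<partial>B)"
  shows "st_le_vec n A V B W"
  unfolding st_le_vec_def
proof (intro allI impI)
  interpret A: prob_space A by (rule pA)
  interpret B: prob_space B by (rule pB)
  fix \<phi> :: "(nat \<Rightarrow> real) \<Rightarrow> real"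
  assume m\<phi>: "\<phi> \<in> borel_measurable (PP n)"
    and mono: "\<forall>x\<in>space (PP n). \<forall>y\<in>space (PP n). (\<forall>i\<in>{1..n}. x i \<le> y i) \<longrightarrow> \<phi> x \<le> \<phi> y"
    and iA: "integrable A (\<lambda>\<omega>. \<phi> (vec n V \<omega>))" and iB: "integrable B (\<lambda>\<omega>. \<phi> (vec n W \<omega>))"
  have step: "(\<integral>\<omega>. max (\<phi> (vec n V \<omega>)) (- real c) \<partial>A) \<le> (\<integral>\<omega>. max (\<phi> (vec n W \<omega>)) (- real c) \<partial>B)" for c :: nat
  proof -
    let ?f = "\<lambda>x. ennreal (max (\<phi> x) (- real c) + real c)"
    have mf: "?f \<in> borel_measurable (PP n)" using m\<phi> by measurable
    have monof: "\<forall>x\<in>space (PP n). \<forall>y\<in>space (PP n). (\<forall>i\<in>{1..n}. x i \<le> y i) \<longrightarrow> ?f x \<le> ?f y"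
    proof (intro ballI impI)
      fix x y assume "x \<in> space (PP n)" "y \<in> space (PP n)" "\<forall>i\<in>{1..n}. x i \<le> y i"
      then have "\<phi> x \<le> \<phi> y" using mono by blast
      then show "?f x \<le> ?f y" by (intro ennreal_leI) simp
    qed
    from core mf monof have le: "(\<integral>\<^sup>+\<omega>. ?f (vec n V \<omega>) \<partial>A) \<le> (\<integral>\<^sup>+\<omega>. ?f (vec n W \<omega>) \<partial>B)" by blast
    have iAm: "integrable A (\<lambda>\<omega>. max (\<phi> (vec n V \<omega>)) (- real c))"
      using integrable_max[OF iA A.integrable_const[of "- real c"]] .
    have iA': "integrable A (\<lambda>\<omega>. max (\<phi> (vec n V \<omega>)) (- real c) + real c)"
      using Bochner_Integration.integrable_add[OF iAm A.integrable_const[of "real c"]] .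
    have iBm: "integrable B (\<lambda>\<omega>. max (\<phi> (vec n W \<omega>)) (- real c))"
      using integrable_max[OF iB B.integrable_const[of "- real c"]] .
    have iB': "integrable B (\<lambda>\<omega>. max (\<phi> (vec n W \<omega>)) (- real c) + real c)"
      using Bochner_Integration.integrable_add[OF iBm B.integrable_const[of "real c"]] .
    have eA: "(\<integral>\<^sup>+\<omega>. ?f (vec n V \<omega>) \<partial>A) = ennreal (\<integral>\<omega>. max (\<phi> (vec n V \<omega>)) (- real c) + real c \<partial>A)"
      by (rule nn_integral_eq_integral[OF iA']) auto
    have eB: "(\<integral>\<^sup>+\<omega>. ?f (vec n W \<omega>) \<partial>B) = ennreal (\<integral>\<omega>. max (\<phi> (vec n W \<omega>)) (- real c) + real c \<partial>B)"
      by (rule nn_integral_eq_integral[OF iB']) auto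
    have nn: "0 \<le> (\<integral>\<omega>. max (\<phi> (vec n W \<omega>)) (- real c) + real c \<partial>B)"
      by (rule integral_nonneg_AE) auto
    from le have "(\<integral>\<omega>. max (\<phi> (vec n V \<omega>)) (- real c) + real c \<partial>A) \<le> (\<integral>\<omega>. max (\<phi> (vec n W \<omega>)) (- real c) + real c \<partial>B)"
      unfolding eA eB using nn by (simp add: ennreal_le_iff)
    moreover have "(\<integral>\<omega>. max (\<phi> (vec n V \<omega>)) (- real c) + real c \<partial>A) = (\<integral>\<omega>. max (\<phi> (vec n V \<omega>)) (- real c) \<partial>A) + real c"
      by (subst Bochner_Integration.integral_add[OF iAm A.integrable_const]) (simp add: A.prob_space)
    moreover have "(\<integral>\<omega>. max (\<phi> (vec n W \<omega>)) (- real c) + real c \<partial>B) = (\<integral>\<omega>. max (\<phi> (vec n W \<omega>)) (- real c) \<partial>B) + real c"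
      by (subst Bochner_Integration.integral_add[OF iBm B.integrable_const]) (simp add: B.prob_space)
    ultimately show ?thesis by simp
  qed
  show "(\<integral>\<omega>. \<phi> (vec n V \<omega>) \<partial>A) \<le> (\<integral>\<omega>. \<phi> (vec n W \<omega>) \<partial>B)"
    using LIMSEQ_le[OF trunc_lim[OF iA] trunc_lim[OF iB]] step by blast
qed

lemma tail_from_nn:
  fixes A :: "'a measure" and B :: "'b measure" and V :: "nat \<Rightarrow> 'a \<Rightarrow> real" and W :: "nat \<Rightarrow> 'b \<Rightarrow> real"
  assumes pA: "prob_space A" and pB: "prob_space B" and k: "1 \<le> k"
    and mV: "V k \<in> borel_measurable A" and mW: "W k \<in> borel_measurable B"
    and core: "\<forall>f. f \<in> borel_measurable (PP k) \<longrightarrow>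
      (\<forall>x\<in>space (PP k). \<forall>y\<in>space (PP k). (\<forall>i\<in>{1..k}. x i \<le> y i) \<longrightarrow> f x \<le> f y) \<longrightarrow>
      (\<integral>\<^sup>+\<omega>. f (vec k V \<omega>) \<partial>A) \<le> (\<integral>\<^sup>+\<omega>. f (vec k W \<omega>) \<partial>B)"
  shows "measure A {\<omega>\<in>space A. t < V k \<omega>} \<le> measure B {\<omega>\<in>space B. t < W k \<omega>}"
proof -
  interpret A: prob_space A by (rule pA)
  interpret B: prob_space B by (rule pB)
  let ?f = "\<lambda>x::nat\<Rightarrow>real. indicator {x. t < x k} x :: ennreal"
  have mf: "?f \<in> borel_measurable (PP k)" using comp_meas[of k "{1..k}"] by measurable
  have monof: "\<forall>x\<in>space (PP k). \<forall>y\<in>space (PP k). (\<forall>i\<in>{1..k}. x i \<le> y i) \<longrightarrow> ?f x \<le> ?f y"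
  proof (intro ballI impI)
    fix x y :: "nat \<Rightarrow> real" assume "\<forall>i\<in>{1..k}. x i \<le> y i"
    then have "x k \<le> y k" using k by auto
    then show "?f x \<le> ?f y" by (auto simp: indicator_def)
  qed
  from core mf monof have le: "(\<integral>\<^sup>+\<omega>. ?f (vec k V \<omega>) \<partial>A) \<le> (\<integral>\<^sup>+\<omega>. ?f (vec k W \<omega>) \<partial>B)" by blast
  have sA: "{\<omega>\<in>space A. t < V k \<omega>} \<in> sets A" using mV by measurable
  have sB: "{\<omega>\<in>space B. t < W k \<omega>} \<in> sets B" using mW by measurable
  have "(\<integral>\<^sup>+\<omega>. ?f (vec k V \<omega>) \<partial>A) = (\<integral>\<^sup>+\<omega>. indicator {\<omega>\<in>space A. t < V k \<omega>} \<omega> \<partial>A)"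
    by (intro nn_integral_cong) (use k in \<open>auto simp: indicator_def vec_def\<close>)
  then have eA: "(\<integral>\<^sup>+\<omega>. ?f (vec k V \<omega>) \<partial>A) = emeasure A {\<omega>\<in>space A. t < V k \<omega>}"
    using nn_integral_indicator[OF sA] by simp
  have "(\<integral>\<^sup>+\<omega>. ?f (vec k W \<omega>) \<partial>B) = (\<integral>\<^sup>+\<omega>. indicator {\<omega>\<in>space B. t < W k \<omega>} \<omega> \<partial>B)"
    by (intro nn_integral_cong) (use k in \<open>auto simp: indicator_def vec_def\<close>)
  then have eB: "(\<integral>\<^sup>+\<omega>. ?f (vec k W \<omega>) \<partial>B) = emeasure B {\<omega>\<in>space B. t < W k \<omega>}"
    using nn_integral_indicator[OF sB] by simp
  from le show ?thesis unfolding eA eB by (simp add: A.emeasure_eq_measure B.emeasure_eq_measure)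
qed

lemma chain_mono:
  assumes "\<forall>i\<ge>1. S i \<omega> \<le> S (Suc i) \<omega>" and "1 \<le> a" and "a \<le> b"
  shows "S a \<omega> \<le> (S b \<omega> :: real)"
  using assms(3)
proof (induct b rule: dec_induct)
  case base then show ?case by simp
next
  case (step b)
  then show ?case using assms(1,2) by (meson order_trans le_trans)
qed

lemma counting_iff:
  assumes mono: "\<forall>i\<ge>1. S i \<omega> \<le> S (Suc i) \<omega>"
  shows "(enat j < counting S t \<omega>) \<longleftrightarrow> S (Suc j) \<omega> \<le> t"
proof
  assume "enat j < counting S t \<omega>"
  then obtain n where n: "1 \<le> n" "S n \<omega> \<le> t" "enat j < enat n"
    unfolding counting_def by (auto simp: less_SUP_iff)
  then have "Suc j \<le> n" by simp
  then have "S (Suc j) \<omega> \<le> S n \<omega>" using chain_mono[of S \<omega> "Suc j" n] mono by simp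
  then show "S (Suc j) \<omega> \<le> t" using n by simp
next
  assume "S (Suc j) \<omega> \<le> t"
  then have "enat (Suc j) \<le> counting S t \<omega>" unfolding counting_def by (intro SUP_upper) auto
  moreover have "enat j < enat (Suc j)" by simp
  ultimately show "enat j < counting S t \<omega>" by (metis order.strict_trans2)
qed

lemma counting_st:
  fixes A :: "'a measure" and B :: "'b measure" and V :: "nat \<Rightarrow> 'a \<Rightarrow> real" and W :: "nat \<Rightarrow> 'b \<Rightarrow> real"
  assumes pA: "prob_space A" and pB: "prob_space B"
    and monoV: "\<forall>\<omega>\<in>space A. \<forall>i\<ge>1. V i \<omega> \<le> V (Suc i) \<omega>"
    and monoW: "\<forall>\<omega>\<in>space B. \<forall>i\<ge>1. W i \<omega> \<le> W (Suc i) \<omega>"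
    and mV: "\<forall>i\<ge>1. V i \<in> borel_measurable A" and mW: "\<forall>i\<ge>1. W i \<in> borel_measurable B"
    and tail: "\<forall>k\<ge>1. measure B {\<omega>\<in>space B. t < W k \<omega>} \<le> measure A {\<omega>\<in>space A. t < V k \<omega>}"
  shows "st_le A (counting V t) B (counting W t)"
  unfolding st_le_def
proof
  interpret A: prob_space A by (rule pA)
  interpret B: prob_space B by (rule pB)
  fix s :: enat
  show "measure A {\<omega> \<in> space A. s < counting V t \<omega>} \<le> measure B {\<omega> \<in> space B. s < counting W t \<omega>}"
  proof (cases s)
    case infinity then show ?thesis by simp
  next
    case (enat j)
    have eA: "{\<omega> \<in> space A. s < counting V t \<omega>} = space A - {\<omega>\<in>space A. t < V (Suc j) \<omega>}"
      using monoV counting_iff[of V] by (auto simp: enat not_less)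
    have eB: "{\<omega> \<in> space B. s < counting W t \<omega>} = space B - {\<omega>\<in>space B. t < W (Suc j) \<omega>}"
      using monoW counting_iff[of W] by (auto simp: enat not_less)
    have mV1: "V (Suc j) \<in> borel_measurable A" using mV by simp
    have mW1: "W (Suc j) \<in> borel_measurable B" using mW by simp
    have sA: "{\<omega>\<in>space A. t < V (Suc j) \<omega>} \<in> sets A" using mV1 by measurable
    have sB: "{\<omega>\<in>space B. t < W (Suc j) \<omega>} \<in> sets B" using mW1 by measurable
    show ?thesis unfolding eA eB using tail sA sB by (simp add: A.prob_compl B.prob_compl)
  qed
qed

theorem theorem3p4:
  fixes M :: "'a measure" and M' :: "'b measure"
    and X Y :: "nat \<Rightarrow> 'a \<Rightarrow> real" and T :: "nat \<Rightarrow> 'b \<Rightarrow> real"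
  assumes "prob_space M" and "prob_space M'"
    and "prob_space.indep_vars M (\<lambda>_. borel) X {1::nat..}"
    and "prob_space.indep_vars M (\<lambda>_. borel) Y {1::nat..}"
    and "\<forall>n\<ge>1. \<forall>\<omega>\<in>space M. 0 \<le> X n \<omega> \<and> 0 \<le> Y n \<omega>"
    and "\<forall>n\<ge>1. continuous_rv M (X n) \<and> continuous_rv M (Y n)"
    and "\<forall>n\<ge>1. \<forall>t\<ge>0. surv M (Y n) t > 0"
    and "relevation_process M' T (\<lambda>n. surv M (Y n))"
  shows
    "(st_le M (Y 1) M (X 1) \<and>
      (\<forall>n\<ge>2. \<forall>t>0. \<forall>s.
         measure M {\<omega>\<in>space M. Y n \<omega> - t > s \<and> Y n \<omega> > t} / measure M {\<omega>\<in>space M. Y n \<omega> > t}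
           \<le> measure M {\<omega>\<in>space M. X n \<omega> > s})
      \<longrightarrow> (\<forall>n\<ge>1. st_le_vec n M' T M (replacement_times X)) \<and>
          (\<forall>t\<ge>0. st_le M (counting (replacement_times X) t) M' (counting T t)))
     \<and>
     (st_le M (X 1) M (Y 1) \<and>
      (\<forall>n\<ge>2. \<forall>t>0. \<forall>s.
         measure M {\<omega>\<in>space M. X n \<omega> > s}
           \<le> measure M {\<omega>\<in>space M. Y n \<omega> - t > s \<and> Y n \<omega> > t} / measure M {\<omega>\<in>space M. Y n \<omega> > t})
      \<longrightarrow> (\<forall>n\<ge>1. st_le_vec n M (replacement_times X) M' T) \<and>
          (\<forall>t\<ge>0. st_le M' (counting T t) M (counting (replacement_times X) t)))"
proof -
  note ctx = assms(1,2,3,4,5,7,8)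
  interpret M: prob_space M by (rule assms(1))
  interpret M': prob_space M' by (rule assms(2))
  let ?S = "replacement_times X"
  have mX: "\<And>i. 1 \<le> i \<Longrightarrow> X i \<in> borel_measurable M" by (rule measX[OF ctx])
  have mT: "\<forall>i\<ge>1. T i \<in> borel_measurable M'" using measT[OF ctx] by blast
  have mS: "\<forall>i\<ge>1. ?S i \<in> borel_measurable M"
  proof (intro allI impI)
    fix i :: nat assume "1 \<le> i"
    have "(\<lambda>\<omega>. \<Sum>j\<in>{1..i}. X j \<omega>) \<in> borel_measurable M"
      by (rule borel_measurable_sum) (use mX in auto)
    then show "?S i \<in> borel_measurable M" by (simp add: replacement_times_def[abs_def])
  qed
  have mvT: "vec n T \<in> measurable M' (PP n)" for n by (rule vec_meas) (use mT in auto)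
  have mvS: "vec n ?S \<in> measurable M (PP n)" for n by (rule vec_meas) (use mS in auto)
  have monoS: "\<forall>\<omega>\<in>space M. \<forall>i\<ge>1. ?S i \<omega> \<le> ?S (Suc i) \<omega>"
    using assms(5) by (auto simp: replacement_times_def)
  have monoT: "\<forall>\<omega>\<in>space M'. \<forall>i\<ge>1. T i \<omega> \<le> T (Suc i) \<omega>"
    using assms(8) by (auto simp: relevation_process_def less_imp_le)
  show ?thesis
  proof (intro conjI impI)
    assume H: "st_le M (Y 1) M (X 1) \<and>
      (\<forall>n\<ge>2. \<forall>t>0. \<forall>s.
         measure M {\<omega>\<in>space M. Y n \<omega> - t > s \<and> Y n \<omega> > t} / measure M {\<omega>\<in>space M. Y n \<omega> > t}
           \<le> measure M {\<omega>\<in>space M. X n \<omega> > s})"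
    have core: "\<forall>f. f \<in> borel_measurable (PP n) \<longrightarrow>
      (\<forall>x\<in>space (PP n). \<forall>y\<in>space (PP n). (\<forall>i\<in>{1..n}. x i \<le> y i) \<longrightarrow> f x \<le> f y) \<longrightarrow>
      (\<integral>\<^sup>+\<omega>'. f (vec n T \<omega>') \<partial>M') \<le> (\<integral>\<^sup>+\<omega>. f (vec n ?S \<omega>) \<partial>M)" if n: "1 \<le> n" for n
      using core1[OF ctx _ _ n] H by blast
    show "\<forall>n\<ge>1. st_le_vec n M' T M ?S"
      using vec_from_nn[OF assms(2,1) mvT mvS core] by blast
    show "\<forall>t\<ge>0. st_le M (counting ?S t) M' (counting T t)"
    proof (intro allI impI)
      fix t :: real
      have tail: "\<forall>k\<ge>1. measure M' {\<omega>\<in>space M'. t < T k \<omega>} \<le> measure M {\<omega>\<in>space M. t < ?S k \<omega>}"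
        using tail_from_nn[OF assms(2,1) _ _ _ core] mT mS by blast
      show "st_le M (counting ?S t) M' (counting T t)"
        by (rule counting_st[OF assms(1,2) monoS monoT mS mT tail])
    qed
  next
    assume H: "st_le M (X 1) M (Y 1) \<and>
      (\<forall>n\<ge>2. \<forall>t>0. \<forall>s.
         measure M {\<omega>\<in>space M. X n \<omega> > s}
           \<le> measure M {\<omega>\<in>space M. Y n \<omega> - t > s \<and> Y n \<omega> > t} / measure M {\<omega>\<in>space M. Y n \<omega> > t})"
    have core: "\<forall>f. f \<in> borel_measurable (PP n) \<longrightarrow>
      (\<forall>x\<in>space (PP n). \<forall>y\<in>space (PP n). (\<forall>i\<in>{1..n}. x i \<le> y i) \<longrightarrow> f x \<le> f y) \<longrightarrow>
      (\<integral>\<^sup>+\<omega>. f (vec n ?S \<omega>) \<partial>M) \<le> (\<integral>\<^sup>+\<omega>'. f (vec n T \<omega>') \<partial>M')" if n: "1 \<le> n" for n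
      using core2[OF ctx _ _ n] H by blast
    show "\<forall>n\<ge>1. st_le_vec n M ?S M' T"
      using vec_from_nn[OF assms(1,2) mvS mvT core] by blast
    show "\<forall>t\<ge>0. st_le M' (counting T t) M (counting ?S t)"
    proof (intro allI impI)
      fix t :: real
      have tail: "\<forall>k\<ge>1. measure M {\<omega>\<in>space M. t < ?S k \<omega>} \<le> measure M' {\<omega>\<in>space M'. t < T k \<omega>}"
        using tail_from_nn[OF assms(1,2) _ _ _ core] mT mS by blast
      show "st_le M' (counting T t) M (counting ?S t)"
        by (rule counting_st[OF assms(2,1) monoT monoS mT mS tail])
    qed
  qed
qed

end
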